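(* Let $\xi_m>0$, $\lambda>0$, $\mu\in(0,\xi_m]$. (i) For any $u_0>0$ define $$u_{n+1}=\frac{\lambda}{\xi_m}u_n\Big(\sqrt{\xi_m^2+u_n^2}-\sqrt{\mu^2+u_n^2}+\mu\ln\frac{\mu+\sqrt{\mu^2+u_n^2}}{u_n}\Big),\quad n\ge0 .$$ Then $(u_n)$ is monotone and converges to a positive limit $u_*$, which is the unique positive solution $\Delta_0$ of the zero-temperature equation $\frac{\xi_m}{\lambda}=\sqrt{\xi_m^2+\Delta_0^2}-\sqrt{\mu^2+\Delta_0^2}+\mu\ln\frac{\mu+\sqrt{\mu^2+\Delta_0^2}}{\Delta_0}$. (ii) For $T>0$ and any $u_0>0$ define $$u_{n+1}=\frac{\lambda}{\xi_m}u_n\Big(2T\ln\frac{\cosh(\sqrt{\xi_m^2+u_n^2}/2T)}{\cosh(\sqrt{\mu^2+u_n^2}/2T)}+\mu\int_0^{\mu}\tanh\Big(\frac{\sqrt{\xi^2+u_n^2}}{2T}\Big)\frac{d\xi}{\sqrt{\xi^2+u_n^2}}\Big),\quad n\ge0 .$$ Then $(u_n)$ is monotone and converges to a limit $u_*\ge0$. If $0<T<T_c$, $u_*>0$ is the unique positive solution $\Delta$ of the finite-temperature gap equation $$\frac{\xi_m}{\lambda}=2T\ln\frac{\cosh(\sqrt{\xi_m^2+\Delta^2}/2T)}{\cosh(\sqrt{\mu^2+\Delta^2}/2T)}+\mu\int_0^{\mu}\tanh\Big(\frac{\sqrt{\xi^2+\Delta^2}}{2T}\Big)\frac{d\xi}{\sqrt{\xi^2+\Delta^2}};$$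 if $T\ge T_c$, then $u_*=0$ (and this gap equation has no positive solution). (iii) For any $\tau_0>0$ define $$\tau_{n+1}=\frac{\lambda}{\xi_m}\tau_n\Big(2\tau_n\ln\frac{\cosh(\xi_m/2\tau_n)}{\cosh(\mu/2\tau_n)}+\mu\int_0^{\mu}\frac1\xi\tanh\Big(\frac{\xi}{2\tau_n}\Big)d\xi\Big),\quad n\ge0 .$$ Then $(\tau_n)$ is monotone and converges to $T_c$. In each case where the limit is positive (case (i), case (ii) with $T<T_c$, case (iii)), the convergence is linear: $\lim_{n\to\infty}\frac{u_{n+1}-u_*}{u_n-u_*}$ (resp. with $\tau$) exists and lies in $(0,1)$ (when $u_n\neq u_*$ for all $n$).
   Context: $T_c=T_c(\mu,\lambda)>0$ denotes the unique positive solution $T$ of $\frac{\xi_m}{\lambda}=2T\ln\frac{\cosh(\xi_m/2T)}{\cosh(\mu/2T)}+\mu\int_0^{\mu}\frac1\xi\tanh\big(\frac{\xi}{2T}\big)d\xi$. *)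

theory Defs
  imports "HOL-Analysis.Analysis"
begin

definition F0 :: "real \<Rightarrow> real \<Rightarrow> real \<Rightarrow> real" where
  "F0 xm mu D = sqrt (xm\<^sup>2 + D\<^sup>2) - sqrt (mu\<^sup>2 + D\<^sup>2)
      + mu * ln ((mu + sqrt (mu\<^sup>2 + D\<^sup>2)) / D)"

definition FT :: "real \<Rightarrow> real \<Rightarrow> real \<Rightarrow> real \<Rightarrow> real" where
  "FT xm mu T D = 2 * T * ln (cosh (sqrt (xm\<^sup>2 + D\<^sup>2) / (2 * T)) / cosh (sqrt (mu\<^sup>2 + D\<^sup>2) / (2 * T)))
      + mu * integral {0..mu} (\<lambda>\<xi>. tanh (sqrt (\<xi>\<^sup>2 + D\<^sup>2) / (2 * T)) / sqrt (\<xi>\<^sup>2 + D\<^sup>2))"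

definition GT :: "real \<Rightarrow> real \<Rightarrow> real \<Rightarrow> real" where
  "GT xm mu T = 2 * T * ln (cosh (xm / (2 * T)) / cosh (mu / (2 * T)))
      + mu * integral {0..mu} (\<lambda>\<xi>. (1 / \<xi>) * tanh (\<xi> / (2 * T)))"

definition Tc :: "real \<Rightarrow> real \<Rightarrow> real \<Rightarrow> real" where
  "Tc xm lam mu = (THE T. T > 0 \<and> xm / lam = GT xm mu T)"

text \<open>Linear convergence of u to L (with u n \<noteq> L for all n).\<close>
definition lin_conv :: "(nat \<Rightarrow> real) \<Rightarrow> real \<Rightarrow> bool" where
  "lin_conv u L \<longleftrightarrow> (\<exists>r. 0 < r \<and> r < 1 \<and> ((\<lambda>n. (u (Suc n) - L) / (u n - L)) \<longlongrightarrow> r) sequentially)"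

end

theory Submission
  imports Defs
begin

lemma iter_conv_fix:
  fixes F :: "real \<Rightarrow> real" and c L :: real and u :: "nat \<Rightarrow> real"
  assumes c: "c > 0"
    and Fpos: "\<And>x. x > 0 \<Longrightarrow> F x > 0"
    and Fdec: "\<And>x y. 0 < x \<Longrightarrow> x < y \<Longrightarrow> F y < F x"
    and gmono: "\<And>x y. 0 < x \<Longrightarrow> x \<le> y \<Longrightarrow> x * F x \<le> y * F y"
    and Fcont: "\<And>x. x > 0 \<Longrightarrow> isCont F x"
    and L: "L > 0" "F L = 1 / c"
    and u0: "u 0 > 0" and rec: "\<And>n. u (Suc n) = c * u n * F (u n)"
  shows "(incseq u \<or> decseq u) \<and> u \<longlonglongrightarrow> L"
proof -
  have upos: "u n > 0" for n
    by (induction n) (use u0 rec Fpos c in auto)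
  have Fle: "F y \<le> F x" if "0 < x" "x \<le> y" for x y
    using Fdec[of x y] that by (cases "x = y") auto
  have uniq: "x = L" if "x > 0" "F x = 1 / c" for x
    using Fdec[of x L] Fdec[of L x] that L by (cases x L rule: linorder_cases) auto
  have lim: "l = L" if "u \<longlonglongrightarrow> l" "l > 0" for l
  proof -
    have "(\<lambda>n. u (Suc n)) \<longlonglongrightarrow> l" using that(1) by (rule LIMSEQ_Suc)
    moreover have "(\<lambda>n. c * u n * F (u n)) \<longlonglongrightarrow> c * l * F l"
      by (intro tendsto_intros that(1) isCont_tendsto_compose[OF Fcont[OF that(2)]])
    ultimately have "l = c * l * F l" using rec by (simp add: LIMSEQ_unique)
    then have "F l = 1 / c" using that(2) c by (simp add: field_simps)
    then show ?thesis using uniq that(2) by blast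
  qed
  show ?thesis
  proof (cases "u 0 \<le> L")
    case True
    have *: "u n \<le> L \<and> u n \<le> u (Suc n)" for n
    proof (induction n)
      case 0
      have "F L \<le> F (u 0)" using Fle upos True by auto
      then have "1 \<le> c * F (u 0)" using L c by (simp add: field_simps)
      then have "u 0 * 1 \<le> u 0 * (c * F (u 0))" using upos[of 0] by (intro mult_left_mono) auto
      then show ?case using True rec[of 0] by (simp add: algebra_simps)
    next
      case (Suc n)
      have a: "u (Suc n) \<le> L"
      proof -
        have "u n * F (u n) \<le> L * F L" using gmono[of "u n" L] Suc upos by auto
        then have "c * (u n * F (u n)) \<le> c * (L * F L)" using c by (intro mult_left_mono) auto
        then show ?thesis using rec[of n] L c by (simp add: field_simps)
      qed
      have "F L \<le> F (u (Suc n))" using Fle upos a by auto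
      then have "1 \<le> c * F (u (Suc n))" using L c by (simp add: field_simps)
      then have "u (Suc n) * 1 \<le> u (Suc n) * (c * F (u (Suc n)))" using upos[of "Suc n"] by (intro mult_left_mono) auto
      then show ?case using a rec[of "Suc n"] by (simp add: algebra_simps)
    qed
    have inc: "incseq u" using * by (intro incseq_SucI) auto
    obtain l where l: "u \<longlonglongrightarrow> l" "\<forall>i. u i \<le> l" using incseq_convergent[OF inc, of L] * by blast
    have "l > 0" using l(2) upos[of 0] by (meson less_le_trans)
    then have "l = L" using lim l(1) by blast
    then show ?thesis using l(1) inc by simp
  next
    case False
    have *: "L \<le> u n \<and> u (Suc n) \<le> u n" for n
    proof (induction n)
      case 0
      have "F (u 0) \<le> F L" using Fle[of L "u 0"] L False by auto
      then have "c * F (u 0) \<le> 1" using L c by (simp add: field_simps)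
      then have "u 0 * (c * F (u 0)) \<le> u 0 * 1" using upos[of 0] by (intro mult_left_mono) auto
      then show ?case using False rec[of 0] by (simp add: algebra_simps)
    next
      case (Suc n)
      have a: "L \<le> u (Suc n)"
      proof -
        have "L * F L \<le> u n * F (u n)" using gmono[of L "u n"] Suc L by auto
        then have "c * (L * F L) \<le> c * (u n * F (u n))" using c by (intro mult_left_mono) auto
        then show ?thesis using rec[of n] L c by (simp add: field_simps)
      qed
      have "F (u (Suc n)) \<le> F L" using Fle[of L "u (Suc n)"] L a by auto
      then have "c * F (u (Suc n)) \<le> 1" using L c by (simp add: field_simps)
      then have "u (Suc n) * (c * F (u (Suc n))) \<le> u (Suc n) * 1" using upos[of "Suc n"] by (intro mult_left_mono) auto
      then show ?case using a rec[of "Suc n"] by (simp add: algebra_simps)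
    qed
    have dec: "decseq u" using * by (intro decseq_SucI) auto
    obtain l where l: "u \<longlonglongrightarrow> l" "\<forall>i. L \<le> u i" using decseq_convergent[OF dec, of L] * by blast
    have "l \<ge> L" using l by (meson LIMSEQ_le_const)
    then have "l > 0" using L by auto
    then have "l = L" using lim l(1) by blast
    then show ?thesis using l(1) dec by simp
  qed
qed

lemma iter_conv_zero:
  fixes F :: "real \<Rightarrow> real" and c :: real and u :: "nat \<Rightarrow> real"
  assumes c: "c > 0"
    and Fpos: "\<And>x. x > 0 \<Longrightarrow> F x > 0"
    and Fsmall: "\<And>x. x > 0 \<Longrightarrow> F x < 1 / c"
    and Fcont: "\<And>x. x > 0 \<Longrightarrow> isCont F x"
    and u0: "u 0 > 0" and rec: "\<And>n. u (Suc n) = c * u n * F (u n)"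
  shows "decseq u \<and> u \<longlonglongrightarrow> 0"
proof -
  have upos: "u n > 0" for n
    by (induction n) (use u0 rec Fpos c in auto)
  have "u (Suc n) \<le> u n" for n
  proof -
    have "c * F (u n) \<le> 1" using Fsmall[OF upos[of n]] c by (simp add: field_simps)
    then have "u n * (c * F (u n)) \<le> u n * 1" using upos[of n] by (intro mult_left_mono) auto
    then show ?thesis using rec[of n] by (simp add: algebra_simps)
  qed
  then have dec: "decseq u" by (intro decseq_SucI) auto
  obtain l where l: "u \<longlonglongrightarrow> l" "\<forall>i. 0 \<le> u i" using decseq_convergent[OF dec, of 0] upos
    by (meson less_le)
  have l0: "l \<ge> 0" using l by (meson LIMSEQ_le_const)
  have "l = 0"
  proof (rule ccontr)
    assume "l \<noteq> 0" then have lp: "l > 0" using l0 by auto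
    have "(\<lambda>n. u (Suc n)) \<longlonglongrightarrow> l" using l(1) by (rule LIMSEQ_Suc)
    moreover have "(\<lambda>n. c * u n * F (u n)) \<longlonglongrightarrow> c * l * F l"
      by (intro tendsto_intros l(1) isCont_tendsto_compose[OF Fcont[OF lp]])
    ultimately have "l = c * l * F l" using rec by (simp add: LIMSEQ_unique)
    then have "F l = 1 / c" using lp c by (simp add: field_simps)
    then show False using Fsmall[OF lp] by simp
  qed
  then show ?thesis using dec l by auto
qed

lemma iter_lin:
  fixes g :: "real \<Rightarrow> real" and L d :: real and u :: "nat \<Rightarrow> real"
  assumes der: "(g has_field_derivative d) (at L)" and d: "0 < d" "d < 1"
    and gL: "g L = L" and lim: "u \<longlonglongrightarrow> L" and ne: "\<forall>n. u n \<noteq> L"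
    and rec: "\<And>n. u (Suc n) = g (u n)"
  shows "lin_conv u L"
proof -
  have q: "((\<lambda>x. (g x - g L) / (x - L)) \<longlongrightarrow> d) (at L)"
    using der by (simp add: has_field_derivative_iff)
  have f: "filterlim u (at L) sequentially"
    using lim ne by (auto simp: filterlim_at intro!: always_eventually)
  have "((\<lambda>n. (g (u n) - g L) / (u n - L)) \<longlongrightarrow> d) sequentially"
    using filterlim_compose[OF q f] by simp
  then have "((\<lambda>n. (u (Suc n) - L) / (u n - L)) \<longlongrightarrow> d) sequentially"
    using rec gL by simp
  then show ?thesis unfolding lin_conv_def using d by blast
qed

lemma pkg_props:
  fixes F F' :: "real \<Rightarrow> real"
  assumes der: "\<And>x. x > 0 \<Longrightarrow> (F has_real_derivative F' x) (at x)"
    and neg: "\<And>x. x > 0 \<Longrightarrow> F' x < 0"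
    and pos: "\<And>x. x > 0 \<Longrightarrow> F x + x * F' x > 0"
  shows "\<And>x::real. x > 0 \<Longrightarrow> F x > 0"
    and "\<And>x y::real. 0 < x \<Longrightarrow> x < y \<Longrightarrow> F y < F x"
    and "\<And>x y::real. 0 < x \<Longrightarrow> x \<le> y \<Longrightarrow> x * F x \<le> y * F y"
    and "\<And>x::real. x > 0 \<Longrightarrow> isCont F x"
proof -
  fix x :: real assume x: "x > 0"
  have "x * F' x < 0" using neg[OF x] x by (simp add: mult_pos_neg)
  then show "F x > 0" using pos[OF x] by linarith
next
  fix x y :: real assume xy: "0 < x" "x < y"
  show "F y < F x"
  proof (rule DERIV_neg_imp_decreasing[OF xy(2)])
    fix t assume "x \<le> t" "t \<le> y"
    then have t: "t > 0" using xy by auto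
    show "\<exists>y. (F has_real_derivative y) (at t) \<and> y < 0" using der[OF t] neg[OF t] by blast
  qed
next
  fix x y :: real assume xy: "0 < x" "x \<le> y"
  show "x * F x \<le> y * F y"
  proof (cases "x = y")
    case False
    then have "x < y" using xy by auto
    have "(\<lambda>t. t * F t) x < (\<lambda>t. t * F t) y"
    proof (rule DERIV_pos_imp_increasing[OF \<open>x < y\<close>])
      fix t assume t: "x \<le> t" "t \<le> y"
      then have t0: "t > 0" using xy by auto
      have "((\<lambda>t. t * F t) has_real_derivative (1 * F t + t * F' t)) (at t)"
        using DERIV_mult[OF DERIV_ident der[OF t0]] by (simp add: mult.commute)
      then show "\<exists>y. ((\<lambda>t. t * F t) has_real_derivative y) (at t) \<and> 0 < y"
        using pos[OF t0] by auto
    qed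
    then show ?thesis by simp
  qed simp
next
  fix x :: real assume "x > 0" then show "isCont F x" using der DERIV_isCont by blast
qed

lemma pkg_fix:
  fixes F F' :: "real \<Rightarrow> real" and c L :: real and u :: "nat \<Rightarrow> real"
  assumes c: "c > 0"
    and der: "\<And>x. x > 0 \<Longrightarrow> (F has_real_derivative F' x) (at x)"
    and neg: "\<And>x. x > 0 \<Longrightarrow> F' x < 0"
    and pos: "\<And>x. x > 0 \<Longrightarrow> F x + x * F' x > 0"
    and L: "L > 0" "F L = 1 / c"
    and u0: "u 0 > 0" and rec: "\<And>n. u (Suc n) = c * u n * F (u n)"
  shows "(incseq u \<or> decseq u) \<and> u \<longlonglongrightarrow> L \<and> ((\<forall>n. u n \<noteq> L) \<longrightarrow> lin_conv u L)"
proof -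
  note P = pkg_props[OF der neg pos]
  have A: "(incseq u \<or> decseq u) \<and> u \<longlonglongrightarrow> L"
    by (rule iter_conv_fix[OF c P(1) P(2) P(3) P(4) L u0 rec]) auto
  have "lin_conv u L" if ne: "\<forall>n. u n \<noteq> L"
  proof (rule iter_lin[where g = "\<lambda>x. c * x * F x"])
    show "((\<lambda>x. c * x * F x) has_field_derivative (c * (F L + L * F' L))) (at L)"
      by (rule derivative_eq_intros der[OF L(1)] refl)+ (simp add: algebra_simps)
    show "0 < c * (F L + L * F' L)" using c pos[OF L(1)] by simp
    have "c * (F L + L * F' L) = 1 + c * (L * F' L)" using L c by (simp add: algebra_simps)
    moreover have "c * (L * F' L) < 0" using c L neg[OF L(1)] by (simp add: mult_pos_neg)
    ultimately show "c * (F L + L * F' L) < 1" by linarith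
    show "c * L * F L = L" using L c by simp
  qed (use A ne rec in auto)
  then show ?thesis using A by blast
qed

lemma tanh_der_real: "(tanh has_real_derivative 1 - tanh y ^ 2) (at (y::real) within A)"
proof -
  have "cosh y \<noteq> 0" using cosh_real_pos[of y] by linarith
  then show ?thesis unfolding tanh_def
    by (auto intro!: derivative_eq_intros simp: power2_eq_square field_split_simps cosh_square_eq)
qed

lemma sq_der: "((\<lambda>D::real. a\<^sup>2 + D\<^sup>2) has_real_derivative 2 * D) (at D within A)"
proof -
  have "((\<lambda>D::real. D ^ 2) has_real_derivative real 2 * D ^ (2 - Suc 0)) (at D within A)"
    by (rule DERIV_pow)
  then have "((\<lambda>D::real. D ^ 2) has_real_derivative 2 * D) (at D within A)" by simp
  from DERIV_add[OF DERIV_const[of "a\<^sup>2"] this] show ?thesis by simp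
qed

lemma sqrt_der:
  fixes a D :: real assumes "a\<^sup>2 + D\<^sup>2 > 0"
  shows "((\<lambda>D. sqrt (a\<^sup>2 + D\<^sup>2)) has_real_derivative D / sqrt (a\<^sup>2 + D\<^sup>2)) (at D within A)"
proof -
  have "((\<lambda>D. sqrt (a\<^sup>2 + D\<^sup>2)) has_real_derivative inverse (sqrt (a\<^sup>2 + D\<^sup>2)) / 2 * (2 * D)) (at D within A)"
    by (rule DERIV_chain'[OF sq_der DERIV_real_sqrt[OF assms]])
  moreover have "inverse (sqrt (a\<^sup>2 + D\<^sup>2)) / 2 * (2 * D) = D / sqrt (a\<^sup>2 + D\<^sup>2)"
    by (simp add: field_simps)
  ultimately show ?thesis by simp
qed

lemma sqrt_der2:
  fixes m D :: real assumes "m\<^sup>2 + D\<^sup>2 > 0"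
  shows "((\<lambda>m. sqrt (m\<^sup>2 + D\<^sup>2)) has_real_derivative m / sqrt (m\<^sup>2 + D\<^sup>2)) (at m within A)"
  using sqrt_der[of D m A] assms by (simp add: add.commute)

lemma ln_comp_der:
  fixes g :: "real \<Rightarrow> real"
  assumes "(g has_real_derivative d) (at x within A)" "g x > 0"
  shows "((\<lambda>x. ln (g x)) has_real_derivative d / g x) (at x within A)"
proof -
  have "((\<lambda>x. ln (g x)) has_real_derivative 1 / g x * d) (at x within A)"
    by (rule DERIV_chain'[OF assms(1) DERIV_ln_divide[OF assms(2)]])
  then show ?thesis by simp
qed

lemma cosh_comp_der:
  fixes g :: "real \<Rightarrow> real"
  assumes "(g has_real_derivative d) (at x within A)"
  shows "((\<lambda>x. cosh (g x)) has_real_derivative sinh (g x) * d) (at x within A)"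
  using has_field_derivative_cosh[OF assms] .

lemma tanh_comp_der:
  fixes g :: "real \<Rightarrow> real"
  assumes "(g has_real_derivative d) (at x within A)"
  shows "((\<lambda>x. tanh (g x)) has_real_derivative (1 - tanh (g x) ^ 2) * d) (at x within A)"
proof -
  have "((\<lambda>x. tanh (g x)) has_real_derivative (1 - tanh (g x) ^ 2) * d) (at x within A)"
    using DERIV_chain'[OF assms tanh_der_real] by (simp only: mult.commute)
  then show ?thesis .
qed

lemma div_const_der:
  fixes g :: "real \<Rightarrow> real"
  assumes "(g has_real_derivative d) (at x within A)"
  shows "((\<lambda>x. g x / c) has_real_derivative d / c) (at x within A)"
  using DERIV_cdivide[OF assms] .

lemma tanh_key:
  fixes y :: real assumes y: "y > 0"
  shows "y * (1 - tanh y ^ 2) < tanh y"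
proof -
  let ?f = "\<lambda>y::real. tanh y - y * (1 - tanh y ^ 2)"
  have "?f 0 < ?f y"
  proof (rule DERIV_pos_imp_increasing_open[OF y])
    fix x :: real assume x: "0 < x" "x < y"
    have "(?f has_real_derivative ((1 - tanh x ^ 2) - (1 * (1 - tanh x ^ 2) + x * (0 - 2 * tanh x * (1 - tanh x ^ 2))))) (at x)"
      by (rule derivative_eq_intros tanh_der_real refl)+ (simp add: power2_eq_square)
    moreover have "(1 - tanh x ^ 2) - (1 * (1 - tanh x ^ 2) + x * (0 - 2 * tanh x * (1 - tanh x ^ 2))) > 0"
    proof -
      have "tanh x ^ 2 < 1" using tanh_real_bounds[of x] by (simp add: abs_square_less_1 abs_less_iff)
      then have "1 - tanh x ^ 2 > 0" by simp
      moreover have "tanh x > 0" using x by simp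
      ultimately have "x * (2 * tanh x * (1 - tanh x ^ 2)) > 0" using x by simp
      then show ?thesis by (simp add: algebra_simps)
    qed
    ultimately show "\<exists>d. (?f has_real_derivative d) (at x) \<and> d > 0" by blast
  next
    show "continuous_on {0..y} ?f" by (intro continuous_intros) auto
  qed
  then show ?thesis by simp
qed

lemma tanh_le_id:
  fixes y :: real assumes y: "y \<ge> 0"
  shows "tanh y \<le> y"
proof -
  have "(\<lambda>y. y - tanh y) 0 \<le> (\<lambda>y. y - tanh y) y"
  proof (rule DERIV_nonneg_imp_nondecreasing[OF y])
    fix x :: real
    have "((\<lambda>y. y - tanh y) has_real_derivative (1 - (1 - tanh x ^ 2))) (at x)"
      by (rule derivative_eq_intros tanh_der_real refl)+
    then show "\<exists>d. ((\<lambda>y. y - tanh y) has_real_derivative d) (at x) \<and> d \<ge> 0" by fastforce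
  qed
  then show ?thesis by simp
qed

lemma tanh_sq_lt1: "tanh (y::real) ^ 2 < 1"
  using tanh_real_bounds[of y] by (simp add: abs_square_less_1 abs_less_iff)

definition S :: "real \<Rightarrow> real" where "S y = (if y = 0 then 1 else tanh y / y)"

lemma S_der:
  assumes "y \<noteq> 0"
  shows "(S has_real_derivative (y * (1 - tanh y ^ 2) - tanh y) / y ^ 2) (at y)"
proof -
  have "((\<lambda>y. tanh y / y) has_real_derivative (y * (1 - tanh y ^ 2) - tanh y) / y ^ 2) (at y)"
    using DERIV_divide[OF tanh_der_real[of y UNIV] DERIV_ident, OF assms]
    by (simp add: power2_eq_square mult.commute)
  then show ?thesis
    by (rule has_field_derivative_transform_within_open[where S = "-{0}"]) (use assms in \<open>auto simp: S_def\<close>)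
qed

lemma S_cont: "isCont S y"
proof (cases "y = 0")
  case True
  have "((\<lambda>h::real. (tanh (0 + h) - tanh 0) / h) \<longlongrightarrow> 1 - tanh (0::real) ^ 2) (at 0)"
    using tanh_der_real[of 0 UNIV] by (simp only: DERIV_def)
  then have "((\<lambda>h::real. tanh h / h) \<longlongrightarrow> 1) (at 0)" by simp
  then have "(S \<longlongrightarrow> 1) (at 0)"
    by (rule Lim_transform_eventually) (auto simp: S_def eventually_at_filter)
  then show ?thesis using True by (simp add: isCont_def S_def)
next
  case False
  then show ?thesis using S_der DERIV_isCont by blast
qed

lemma S_pos: "S y > 0"
  by (auto simp: S_def divide_pos_pos divide_neg_neg linorder_neq_iff)

lemma S_le1: "y \<ge> 0 \<Longrightarrow> S y \<le> 1"
  using tanh_le_id[of y] by (auto simp: S_def)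

lemma S_mono:
  assumes "0 \<le> a" "a < b"
  shows "S b < S a"
proof (rule DERIV_neg_imp_decreasing_open[OF assms(2)])
  fix x assume x: "a < x" "x < b"
  then have x0: "x > 0" using assms by auto
  have "x * (1 - tanh x ^ 2) - tanh x < 0" using tanh_key[OF x0] by simp
  then have "(x * (1 - tanh x ^ 2) - tanh x) / x ^ 2 < 0" using x0 by (simp add: divide_neg_pos)
  then show "\<exists>y. (S has_real_derivative y) (at x) \<and> y < 0" using S_der[of x] x0 by auto
next
  show "continuous_on {a..b} S" using S_cont by (simp add: continuous_at_imp_continuous_on)
qed

lemma S_lip:
  assumes "0 \<le> a" "a \<le> b"
  shows "S a - S b \<le> b - a"
proof (cases "a = b")
  case False
  then have ab: "a < b" using assms by auto
  obtain l z where z: "a < z" "z < b" "(S has_real_derivative l) (at z)" "S b - S a = (b - a) * l"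
    using MVT[OF ab, of S] S_cont S_der
    by (metis continuous_at_imp_continuous_on real_differentiable_def less_le_trans assms(1) less_numeral_extra(3) order_less_irrefl)
  have z0: "z > 0" using z assms by auto
  have l: "l = (z * (1 - tanh z ^ 2) - tanh z) / z ^ 2"
    using DERIV_unique[OF z(3) S_der] z0 by auto
  have "tanh z - z * (1 - tanh z ^ 2) \<le> z * tanh z ^ 2"
    using tanh_le_id[of z] z0 by (simp add: algebra_simps)
  also have "\<dots> \<le> z * z"
  proof -
    have "tanh z ^ 2 \<le> tanh z" using tanh_real_bounds[of z] z0
      by (simp add: power2_eq_square mult_le_cancel_left1 less_imp_le)
    also have "\<dots> \<le> z" using tanh_le_id z0 by simp
    finally show ?thesis using z0 by simp
  qed
  finally have a: "tanh z - z * (1 - tanh z ^ 2) \<le> z * z" .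
  have "l * z ^ 2 = z * (1 - tanh z ^ 2) - tanh z" using l z0 by simp
  then have "(-l) * (z * z) \<le> 1 * (z * z)" using a by (simp add: power2_eq_square)
  then have "-l \<le> 1" using z0 by (meson mult_right_le_imp_le mult_pos_pos)
  then have "(b - a) * (-l) \<le> (b - a) * 1" using ab by (intro mult_left_mono) auto
  then show ?thesis using z(4) by (simp add: algebra_simps)
qed simp

definition gk :: "real \<Rightarrow> real \<Rightarrow> real" where "gk T s = S (s / (2 * T)) / (2 * T)"

lemma root_exists:
  fixes F :: "real \<Rightarrow> real"
  assumes Fdec: "\<And>x y. 0 < x \<Longrightarrow> x < y \<Longrightarrow> F y < F x"
    and Fcont: "\<And>x. x > 0 \<Longrightarrow> isCont F x"
    and a: "a > 0" "F a \<ge> K" and b: "b > 0" "F b \<le> K"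
  shows "\<exists>L>0. F L = K \<and> (\<forall>D>0. F D = K \<longleftrightarrow> D = L)"
proof -
  have ab: "a \<le> b"
  proof (rule ccontr)
    assume "\<not> a \<le> b" then have "F a < F b" using Fdec[of b a] b by auto
    then show False using a b by auto
  qed
  have "\<forall>x. a \<le> x \<and> x \<le> b \<longrightarrow> isCont F x" using Fcont a by auto
  then obtain L where L: "a \<le> L" "L \<le> b" "F L = K"
    using IVT2[of F b K a] ab a(2) b(2) by blast
  have L0: "L > 0" using L a by auto
  have "F D = K \<longleftrightarrow> D = L" if "D > 0" for D
    using Fdec[of D L] Fdec[of L D] that L0 L by (cases D L rule: linorder_cases) auto
  then show ?thesis using L0 L by blast
qed

lemma F0_der:
  fixes xm mu D :: real
  assumes D: "D > 0" and mu: "mu > 0"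
  shows "(F0 xm mu has_real_derivative
     (D / sqrt (xm\<^sup>2 + D\<^sup>2) - D / sqrt (mu\<^sup>2 + D\<^sup>2) - mu\<^sup>2 / (D * sqrt (mu\<^sup>2 + D\<^sup>2)))) (at D)"
proof -
  define sm where "sm = sqrt (mu\<^sup>2 + D\<^sup>2)"
  have p: "a\<^sup>2 + D\<^sup>2 > 0" for a using D by (simp add: add_nonneg_pos)
  have sm: "sm > 0" "sm\<^sup>2 = mu\<^sup>2 + D\<^sup>2" using p[of mu] by (auto simp: sm_def)
  have ms: "mu + sm > 0" using mu sm by auto
  have l1: "((\<lambda>D. ln (mu + sqrt (mu\<^sup>2 + D\<^sup>2)) - ln D) has_real_derivative (D / sm) / (mu + sm) - 1 / D) (at D)"
  proof (rule DERIV_diff)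
    show "((\<lambda>D. ln (mu + sqrt (mu\<^sup>2 + D\<^sup>2))) has_real_derivative (D / sm) / (mu + sm)) (at D)"
    proof -
      have "((\<lambda>D. ln (mu + sqrt (mu\<^sup>2 + D\<^sup>2))) has_real_derivative (1 / (mu + sm)) * (0 + D / sm)) (at D)"
        using DERIV_chain2[OF DERIV_ln_divide[OF ms[unfolded sm_def]] DERIV_add[OF DERIV_const sqrt_der[OF p[of mu], of UNIV]]]
        unfolding sm_def by simp
      then show ?thesis by (simp add: mult.commute)
    qed
    show "(ln has_real_derivative 1 / D) (at D)" using DERIV_ln_divide[OF D] .
  qed
  have l2: "((\<lambda>D. ln ((mu + sqrt (mu\<^sup>2 + D\<^sup>2)) / D)) has_real_derivative (D / sm) / (mu + sm) - 1 / D) (at D)"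
    by (rule has_field_derivative_transform_within_open[OF l1, where S = "{0<..}"])
       (use D mu in \<open>auto simp: ln_divide_pos add_pos_nonneg\<close>)
  have "(F0 xm mu has_real_derivative
     (D / sqrt (xm\<^sup>2 + D\<^sup>2) - D / sqrt (mu\<^sup>2 + D\<^sup>2) + mu * ((D / sm) / (mu + sm) - 1 / D))) (at D)"
    unfolding F0_def[abs_def]
    by (intro DERIV_add DERIV_diff DERIV_cmult sqrt_der p l2)
  moreover have "mu * ((D / sm) / (mu + sm) - 1 / D) = - mu\<^sup>2 / (D * sm)"
  proof -
    have "D / sm / (mu + sm) - 1 / D = (D * D - sm * (mu + sm)) / (D * sm * (mu + sm))"
    proof -
      have "mu * sm + sm * sm > 0" "D * (mu * sm) + D * (sm * sm) > 0" using D sm mu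
        by (auto intro!: add_pos_pos mult_pos_pos)
      then show ?thesis using D sm ms by (simp add: field_simps)
    qed
    also have "D * D - sm * (mu + sm) = - mu * (mu + sm)" using sm(2) by (simp add: algebra_simps power2_eq_square)
    finally have "D / sm / (mu + sm) - 1 / D = ((- mu) * (mu + sm)) / ((D * sm) * (mu + sm))"
      by (simp add: mult.assoc)
    also have "\<dots> = (- mu) / (D * sm)" using ms by (rule mult_divide_mult_cancel_right[OF less_imp_neq[symmetric]])
    finally show ?thesis by (simp add: power2_eq_square)
  qed
  ultimately show ?thesis by (simp add: sm_def)
qed

lemma ln_asinh_ineq:
  fixes mu D :: real assumes mu: "mu > 0" and D: "D > 0"
  shows "ln ((mu + sqrt (mu\<^sup>2 + D\<^sup>2)) / D) > mu / sqrt (mu\<^sup>2 + D\<^sup>2)"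
proof -
  let ?f = "\<lambda>m. ln ((m + sqrt (m\<^sup>2 + D\<^sup>2)) / D) - m / sqrt (m\<^sup>2 + D\<^sup>2)"
  have der: "(?f has_real_derivative m\<^sup>2 / sqrt (m\<^sup>2 + D\<^sup>2) ^ 3) (at m)" if m: "m \<ge> 0" for m
  proof -
    define s where "s = sqrt (m\<^sup>2 + D\<^sup>2)"
    have s: "s > 0" "s\<^sup>2 = m\<^sup>2 + D\<^sup>2" using D by (auto simp: s_def add_nonneg_pos)
    have ms: "m + s > 0" using m s by auto
    have sd: "((\<lambda>m. sqrt (m\<^sup>2 + D\<^sup>2)) has_real_derivative m / s) (at m)"
      unfolding s_def by (rule sqrt_der2) (use s in \<open>simp add: s_def\<close>)
    have d1: "((\<lambda>m. (m + sqrt (m\<^sup>2 + D\<^sup>2)) / D) has_real_derivative (1 + m / s) / D) (at m)"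
      by (rule div_const_der, rule DERIV_add[OF DERIV_ident sd])
    have d2: "((\<lambda>m. ln ((m + sqrt (m\<^sup>2 + D\<^sup>2)) / D)) has_real_derivative ((1 + m / s) / D) / ((m + s) / D)) (at m)"
      using ln_comp_der[OF d1] ms D unfolding s_def by simp
    have d3: "((\<lambda>m. m / sqrt (m\<^sup>2 + D\<^sup>2)) has_real_derivative (1 * s - m * (m / s)) / (s * s)) (at m)"
    proof -
      have nz: "sqrt (m\<^sup>2 + D\<^sup>2) \<noteq> 0" using s D by (simp add: s_def)
      show ?thesis using DERIV_divide[OF DERIV_ident sd nz] unfolding s_def by simp
    qed
    have "(?f has_real_derivative
       ((1 + m / s) / D) / ((m + s) / D) - (1 * s - m * (m / s)) / (s * s)) (at m)"
      by (rule DERIV_diff[OF d2 d3])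
    moreover have "((1 + m / s) / D) / ((m + s) / D) - (1 * s - m * (m / s)) / (s * s)
        = m\<^sup>2 / s ^ 3"
    proof -
      have "D * (m * s) + D * (s * s) > 0" using s m D by (intro add_nonneg_pos mult_pos_pos mult_nonneg_nonneg) auto
      then have nz: "D * (m * s) + D * (s * s) \<noteq> 0" by simp
      have a: "(1 + m / s) / D / ((m + s) / D) = 1 / s"
        using s ms D nz by (simp add: field_simps)
      have b: "(1 * s - m * (m / s)) / (s * s) = D\<^sup>2 / s ^ 3"
        using s by (simp add: field_simps power2_eq_square power3_eq_cube)
      have "1 / s = s\<^sup>2 / s ^ 3" using s(1) by (simp add: power3_eq_cube power2_eq_square)
      then show ?thesis unfolding a b using s(2) by (simp add: diff_divide_distrib[symmetric])
    qed
    ultimately show ?thesis by (simp add: s_def)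
  qed
  have "?f 0 < ?f mu"
  proof (rule DERIV_pos_imp_increasing_open[OF mu])
    fix m :: real assume m: "0 < m" "m < mu"
    have "sqrt (m\<^sup>2 + D\<^sup>2) > 0" using D by (simp add: add_nonneg_pos)
    then have "m\<^sup>2 / sqrt (m\<^sup>2 + D\<^sup>2) ^ 3 > 0" using m(1) by (intro divide_pos_pos) auto
    moreover have "(?f has_real_derivative m\<^sup>2 / sqrt (m\<^sup>2 + D\<^sup>2) ^ 3) (at m)" using der[of m] m by simp
    ultimately show "\<exists>y. (?f has_real_derivative y) (at m) \<and> 0 < y" by blast
  next
    show "continuous_on {0..mu} ?f"
      by (rule DERIV_atLeastAtMost_imp_continuous_on) (use der in auto)
  qed
  moreover have "?f 0 = 0" using D by simp
  ultimately show ?thesis by simp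
qed

lemma F0_props:
  fixes xm mu D :: real
  assumes D: "D > 0" and mu: "mu > 0" and mx: "mu \<le> xm"
  defines "F' \<equiv> D / sqrt (xm\<^sup>2 + D\<^sup>2) - D / sqrt (mu\<^sup>2 + D\<^sup>2) - mu\<^sup>2 / (D * sqrt (mu\<^sup>2 + D\<^sup>2))"
  shows "F' < 0" "F0 xm mu D + D * F' > 0"
proof -
  define sx where "sx = sqrt (xm\<^sup>2 + D\<^sup>2)"
  define sm where "sm = sqrt (mu\<^sup>2 + D\<^sup>2)"
  have sx: "sx > 0" "sx\<^sup>2 = xm\<^sup>2 + D\<^sup>2" using D by (auto simp: sx_def add_nonneg_pos)
  have sm: "sm > 0" "sm\<^sup>2 = mu\<^sup>2 + D\<^sup>2" using D by (auto simp: sm_def add_nonneg_pos)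
  have smx: "sm \<le> sx" unfolding sm_def sx_def using mu mx by (intro real_sqrt_le_mono) (simp add: power_mono)
  have Dsm: "D \<le> sm" unfolding sm_def by (rule real_le_rsqrt) simp
  have a: "D / sx \<le> D / sm" using smx sm D by (intro divide_left_mono) auto
  have b: "mu\<^sup>2 / (D * sm) > 0" using mu D sm by simp
  show "F' < 0" using a b unfolding F'_def sx_def[symmetric] sm_def[symmetric] by linarith
  have c: "sm + D\<^sup>2 / sm \<le> sx + D\<^sup>2 / sx"
  proof -
    have "D\<^sup>2 \<le> sm * sx" using Dsm smx D by (metis mult_mono power2_eq_square less_imp_le order_trans)
    then have "D\<^sup>2 * (sx - sm) \<le> sm * sx * (sx - sm)" using smx by (intro mult_right_mono) auto
    then have "sm * sm * sx + D\<^sup>2 * sx \<le> sx * sx * sm + D\<^sup>2 * sm" by (simp add: algebra_simps)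
    then show ?thesis using sm sx by (simp add: field_simps)
  qed
  have d: "mu * ln ((mu + sm) / D) > mu * (mu / sm)"
    using mult_strict_left_mono[OF ln_asinh_ineq[OF mu D] mu] unfolding sm_def by simp
  have dF: "D * F' = D\<^sup>2 / sx - D\<^sup>2 / sm - mu * (mu / sm)"
    unfolding F'_def sx_def[symmetric] sm_def[symmetric] using sx sm D
    by (simp add: field_simps power2_eq_square)
  have e: "F0 xm mu D + D * F' = (sx + D\<^sup>2 / sx) - (sm + D\<^sup>2 / sm) + (mu * ln ((mu + sm) / D) - mu * (mu / sm))"
    unfolding F0_def sx_def[symmetric] sm_def[symmetric] dF by (simp add: algebra_simps)
  show "F0 xm mu D + D * F' > 0" unfolding e using c d by linarith
qed

lemma F0_low:
  fixes xm mu D :: real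
  assumes D: "D > 0" and mu: "mu > 0" and mx: "mu \<le> xm"
  shows "F0 xm mu D \<ge> mu * ln (mu / D)"
proof -
  define sx where "sx = sqrt (xm\<^sup>2 + D\<^sup>2)"
  define sm where "sm = sqrt (mu\<^sup>2 + D\<^sup>2)"
  have sm: "sm > 0" using D by (auto simp: sm_def add_nonneg_pos)
  have smx: "sm \<le> sx" unfolding sm_def sx_def using mu mx by (intro real_sqrt_le_mono) (simp add: power_mono)
  have "ln (mu / D) \<le> ln ((mu + sm) / D)" using mu D sm by (simp add: divide_right_mono)
  then have "mu * ln (mu / D) \<le> mu * ln ((mu + sm) / D)" using mu by simp
  then show ?thesis unfolding F0_def sx_def[symmetric] sm_def[symmetric] using smx by linarith
qed

lemma F0_up:
  fixes xm mu D :: real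
  assumes D: "D > 0" and mu: "mu > 0" and mx: "mu \<le> xm"
  shows "F0 xm mu D \<le> 3 * xm\<^sup>2 / D"
proof -
  define sx where "sx = sqrt (xm\<^sup>2 + D\<^sup>2)"
  define sm where "sm = sqrt (mu\<^sup>2 + D\<^sup>2)"
  have sx: "sx > 0" "sx\<^sup>2 = xm\<^sup>2 + D\<^sup>2" using D by (auto simp: sx_def add_nonneg_pos)
  have sm: "sm > 0" "sm\<^sup>2 = mu\<^sup>2 + D\<^sup>2" using D by (auto simp: sm_def add_nonneg_pos)
  have Dsm: "D \<le> sm" unfolding sm_def by (rule real_le_rsqrt) simp
  have Dsx: "D \<le> sx" unfolding sx_def by (rule real_le_rsqrt) simp
  have smD: "sm \<le> mu + D"
  proof -
    have "sqrt (mu\<^sup>2 + D\<^sup>2) \<le> sqrt ((mu + D)\<^sup>2)"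
      by (rule real_sqrt_le_mono) (use mu D in \<open>simp add: power2_eq_square algebra_simps\<close>)
    then show ?thesis using mu D by (simp add: sm_def)
  qed
  have "(sx - sm) * (sx + sm) = xm\<^sup>2 - mu\<^sup>2" using sx sm by (simp add: algebra_simps power2_eq_square)
  then have "(sx - sm) * (sx + sm) \<le> xm\<^sup>2" by simp
  then have "sx - sm \<le> xm\<^sup>2 / (sx + sm)" using sx sm by (simp add: field_simps)
  also have "\<dots> \<le> xm\<^sup>2 / (2 * D)" using Dsm Dsx D by (intro divide_left_mono) auto
  finally have a: "sx - sm \<le> xm\<^sup>2 / (2 * D)" .
  have "ln ((mu + sm) / D) \<le> (mu + sm) / D - 1" using mu sm D by (intro ln_le_minus_one) simp
  also have "\<dots> = (mu + sm - D) / D" using D by (simp add: field_simps)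
  also have "\<dots> \<le> 2 * mu / D" by (rule divide_right_mono) (use smD D in auto)
  finally have "ln ((mu + sm) / D) \<le> 2 * mu / D" .
  then have "mu * ln ((mu + sm) / D) \<le> mu * (2 * mu / D)" using mu by (intro mult_left_mono) auto
  also have "\<dots> \<le> 2 * xm\<^sup>2 / D" using mu mx D
    by (simp add: field_simps power2_eq_square mult_mono)
  finally have b: "mu * ln ((mu + sm) / D) \<le> 2 * xm\<^sup>2 / D" .
  have "F0 xm mu D \<le> xm\<^sup>2 / (2 * D) + 2 * xm\<^sup>2 / D"
    unfolding F0_def sx_def[symmetric] sm_def[symmetric] using a b by linarith
  also have "\<dots> \<le> 3 * xm\<^sup>2 / D" using D by (simp add: field_simps)
  finally show ?thesis .
qed

lemma part_i:
  fixes xm lam mu :: real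
  assumes "xm > 0" and "lam > 0" and "0 < mu" and "mu \<le> xm"
  shows "\<forall>u :: nat \<Rightarrow> real. u 0 > 0 \<and> (\<forall>n. u (Suc n) = lam / xm * u n * F0 xm mu (u n)) \<longrightarrow>
       (incseq u \<or> decseq u) \<and>
       (\<exists>L. u \<longlonglongrightarrow> L \<and> L > 0 \<and> (\<forall>D>0. xm / lam = F0 xm mu D \<longleftrightarrow> D = L) \<and>
            ((\<forall>n. u n \<noteq> L) \<longrightarrow> lin_conv u L))"
proof (intro allI impI)
  fix u :: "nat \<Rightarrow> real"
  assume u: "u 0 > 0 \<and> (\<forall>n. u (Suc n) = lam / xm * u n * F0 xm mu (u n))"
  define c where "c = lam / xm"
  define K where "K = xm / lam"
  have c: "c > 0" "1 / c = K" using assms by (auto simp: c_def K_def)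
  have K: "K > 0" using assms by (simp add: K_def)
  define F' where "F' = (\<lambda>D. D / sqrt (xm\<^sup>2 + D\<^sup>2) - D / sqrt (mu\<^sup>2 + D\<^sup>2) - mu\<^sup>2 / (D * sqrt (mu\<^sup>2 + D\<^sup>2)))"
  have der: "\<And>x. x > 0 \<Longrightarrow> (F0 xm mu has_real_derivative F' x) (at x)"
    unfolding F'_def using F0_der assms by blast
  have neg: "\<And>x. x > 0 \<Longrightarrow> F' x < 0" unfolding F'_def using F0_props assms by blast
  have pos: "\<And>x. x > 0 \<Longrightarrow> F0 xm mu x + x * F' x > 0" unfolding F'_def using F0_props assms by blast
  note P = pkg_props[OF der neg pos]
  define D1 where "D1 = mu * exp (- K / mu)"
  define D2 where "D2 = 3 * xm\<^sup>2 / K"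
  have D1: "D1 > 0" using assms by (simp add: D1_def)
  have D2: "D2 > 0" using assms K by (simp add: D2_def)
  have "F0 xm mu D1 \<ge> K"
  proof -
    have "mu * ln (mu / D1) = K" using assms by (simp add: D1_def ln_div)
    then show ?thesis using F0_low[OF D1 assms(3,4)] by simp
  qed
  moreover have "F0 xm mu D2 \<le> K"
    using F0_up[OF D2 assms(3,4)] K assms by (simp add: D2_def)
  ultimately obtain L where L: "L > 0" "F0 xm mu L = K" "\<forall>D>0. F0 xm mu D = K \<longleftrightarrow> D = L"
    using root_exists[OF P(2) P(4) D1 _ D2] by blast
  have rec: "\<And>n. u (Suc n) = c * u n * F0 xm mu (u n)" using u by (simp add: c_def)
  have "(incseq u \<or> decseq u) \<and> u \<longlonglongrightarrow> L \<and> ((\<forall>n. u n \<noteq> L) \<longrightarrow> lin_conv u L)"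
    by (rule pkg_fix[OF c(1) der neg pos L(1)]) (use L c u rec in auto)
  moreover have "\<forall>D>0. xm / lam = F0 xm mu D \<longleftrightarrow> D = L" using L(3) K_def by auto
  ultimately show "(incseq u \<or> decseq u) \<and>
       (\<exists>L. u \<longlonglongrightarrow> L \<and> L > 0 \<and> (\<forall>D>0. xm / lam = F0 xm mu D \<longleftrightarrow> D = L) \<and>
            ((\<forall>n. u n \<noteq> L) \<longrightarrow> lin_conv u L))" using L by blast
qed

lemma int_pos:
  fixes f :: "real \<Rightarrow> real"
  assumes ab: "a < b" and cont: "continuous_on {a..b} f"
    and nn: "\<And>x. x \<in> {a..b} \<Longrightarrow> f x \<ge> 0" and fb: "f b > 0"
  shows "integral {a..b} f > 0"
proof -
  have "continuous (at b within {a..b}) f" using cont ab by (simp add: continuous_on_eq_continuous_within)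
  then obtain d where d: "d > 0" "\<And>x. x \<in> {a..b} \<Longrightarrow> dist x b < d \<Longrightarrow> dist (f x) (f b) < f b / 2"
    using fb unfolding continuous_within_eps_delta by (metis half_gt_zero)
  define c where "c = b - min (d / 2) (b - a)"
  have c: "a \<le> c" "c < b" using d ab by (auto simp: c_def)
  have int: "f integrable_on {a..b}" using cont by (rule integrable_continuous_interval)
  have big: "f x \<ge> f b / 2" if "x \<in> {c..b}" for x
  proof -
    have "x \<in> {a..b}" "dist x b < d" using that c d by (auto simp: dist_real_def c_def)
    then have "dist (f x) (f b) < f b / 2" by (rule d(2))
    then have "\<bar>f x - f b\<bar> < f b / 2" by (simp add: dist_real_def)
    then show ?thesis by arith
  qed
  have "integral {c..b} (\<lambda>x. f b / 2) \<le> integral {c..b} f"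
    by (rule integral_le) (use int c big in \<open>auto intro: integrable_subinterval_real\<close>)
  moreover have "integral {c..b} (\<lambda>x. f b / 2) > 0" using c fb by simp
  moreover have "integral {a..c} f \<ge> 0"
    by (rule integral_nonneg) (use int c nn in \<open>auto intro: integrable_subinterval_real\<close>)
  moreover have "integral {a..c} f + integral {c..b} f = integral {a..b} f"
    using Henstock_Kurzweil_Integration.integral_combine[OF c(1) less_imp_le[OF c(2)] int] .
  ultimately show ?thesis by linarith
qed

definition hT :: "real \<Rightarrow> real \<Rightarrow> real \<Rightarrow> real" where
  "hT T D \<xi> = tanh (sqrt (\<xi>\<^sup>2 + D\<^sup>2) / (2 * T)) / sqrt (\<xi>\<^sup>2 + D\<^sup>2)"

lemma lncosh_der:
  fixes T D x :: real
  assumes T: "T > 0" and D: "D > 0"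
  shows "((\<lambda>\<xi>. 2 * T * ln (cosh (sqrt (\<xi>\<^sup>2 + D\<^sup>2) / (2 * T)))) has_real_derivative x * hT T D x) (at x within A)"
proof -
  define r where "r = sqrt (x\<^sup>2 + D\<^sup>2)"
  have p: "x\<^sup>2 + D\<^sup>2 > 0" using D by (simp add: add_nonneg_pos)
  have r: "r > 0" using p by (simp add: r_def)
  have d1: "((\<lambda>\<xi>. sqrt (\<xi>\<^sup>2 + D\<^sup>2) / (2 * T)) has_real_derivative (x / r) / (2 * T)) (at x within A)"
    unfolding r_def by (rule div_const_der[OF sqrt_der2[OF p]])
  have d2: "((\<lambda>\<xi>. cosh (sqrt (\<xi>\<^sup>2 + D\<^sup>2) / (2 * T))) has_real_derivative sinh (r / (2 * T)) * ((x / r) / (2 * T))) (at x within A)"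
    using cosh_comp_der[OF d1] unfolding r_def .
  have d3: "((\<lambda>\<xi>. ln (cosh (sqrt (\<xi>\<^sup>2 + D\<^sup>2) / (2 * T)))) has_real_derivative sinh (r / (2 * T)) * ((x / r) / (2 * T)) / cosh (r / (2 * T))) (at x within A)"
    using ln_comp_der[OF d2] cosh_real_pos unfolding r_def by blast
  have "((\<lambda>\<xi>. 2 * T * ln (cosh (sqrt (\<xi>\<^sup>2 + D\<^sup>2) / (2 * T)))) has_real_derivative
     2 * T * (sinh (r / (2 * T)) * ((x / r) / (2 * T)) / cosh (r / (2 * T)))) (at x within A)"
    by (rule DERIV_cmult[OF d3])
  moreover have "2 * T * (sinh (r / (2 * T)) * ((x / r) / (2 * T)) / cosh (r / (2 * T))) = x * hT T D x"
  proof -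
    have h: "hT T D x = tanh (r / (2 * T)) / r" by (simp add: hT_def r_def)
    have c: "cosh (r / (2 * T)) > 0" by simp
    show ?thesis unfolding h tanh_def using r T c by (simp add: field_simps)
  qed
  ultimately show ?thesis by simp
qed

lemma FT_repr:
  fixes xm mu T D :: real
  assumes T: "T > 0" and D: "D > 0" and mu: "mu > 0" and mx: "mu \<le> xm"
  shows "FT xm mu T D = integral {0..xm} (\<lambda>\<xi>. max mu \<xi> * hT T D \<xi>)"
proof -
  have cont: "continuous_on {a..b} (\<lambda>\<xi>. c * hT T D \<xi>)" for a b c
    unfolding hT_def using D T
    by (intro continuous_intros) (auto simp: add_nonneg_pos less_imp_neq[symmetric] cosh_real_pos)
  have cont2: "continuous_on {a..b} (\<lambda>\<xi>. max mu \<xi> * hT T D \<xi>)" for a b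
    unfolding hT_def using D T
    by (intro continuous_intros) (auto simp: add_nonneg_pos less_imp_neq[symmetric] cosh_real_pos)
  define G where "G = (\<lambda>\<xi>. 2 * T * ln (cosh (sqrt (\<xi>\<^sup>2 + D\<^sup>2) / (2 * T))))"
  have "((\<lambda>\<xi>. \<xi> * hT T D \<xi>) has_integral (G xm - G mu)) {mu..xm}"
    unfolding G_def
    by (rule fundamental_theorem_of_calculus[OF mx])
       (use lncosh_der[OF T D] in \<open>auto simp: has_real_derivative_iff_has_vector_derivative[symmetric]\<close>)
  then have i2: "integral {mu..xm} (\<lambda>\<xi>. max mu \<xi> * hT T D \<xi>) = G xm - G mu"
    by (subst integral_cong[where g = "\<lambda>\<xi>. \<xi> * hT T D \<xi>"]) (auto intro: integral_unique)
  have i1: "integral {0..mu} (\<lambda>\<xi>. max mu \<xi> * hT T D \<xi>) = mu * integral {0..mu} (hT T D)"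
  proof -
    have "integral {0..mu} (\<lambda>\<xi>. max mu \<xi> * hT T D \<xi>) = integral {0..mu} (\<lambda>\<xi>. mu * hT T D \<xi>)"
      by (rule integral_cong) auto
    also have "\<dots> = mu * integral {0..mu} (hT T D)"
      using integral_mult[of "hT T D" "{0..mu}" mu] cont[of 0 mu 1] integrable_continuous_interval by auto
    finally show ?thesis .
  qed
  have comb: "integral {0..mu} (\<lambda>\<xi>. max mu \<xi> * hT T D \<xi>) + integral {mu..xm} (\<lambda>\<xi>. max mu \<xi> * hT T D \<xi>)
      = integral {0..xm} (\<lambda>\<xi>. max mu \<xi> * hT T D \<xi>)"
    by (rule Henstock_Kurzweil_Integration.integral_combine) (use mu mx integrable_continuous_interval[OF cont2] in auto)
  have lnd: "2 * T * ln (cosh (sqrt (xm\<^sup>2 + D\<^sup>2) / (2 * T)) / cosh (sqrt (mu\<^sup>2 + D\<^sup>2) / (2 * T))) = G xm - G mu"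
    unfolding G_def by (simp add: ln_divide_pos cosh_real_pos algebra_simps)
  show ?thesis unfolding FT_def lnd comb[symmetric] i1 i2
    by (simp add: hT_def[abs_def])
qed

lemma gk_nz: "s \<noteq> 0 \<Longrightarrow> gk T s = tanh (s / (2 * T)) / s"
  by (cases "T = 0") (auto simp: gk_def S_def field_simps)

lemma gk_zero: "gk T 0 = 1 / (2 * T)"
  by (simp add: gk_def S_def)

lemma gk_cont: assumes "T \<noteq> 0" shows "continuous_on A (gk T)"
proof -
  have "continuous_on A (\<lambda>s. S (s / (2 * T)) / (2 * T))"
    by (intro continuous_intros continuous_on_compose2[OF continuous_at_imp_continuous_on[of UNIV S]])
       (use assms in \<open>auto simp: S_cont\<close>)
  then show ?thesis by (simp add: gk_def[abs_def])
qed

lemma GT_repr: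
  fixes xm mu T :: real
  assumes T: "T > 0" and mu: "mu > 0" and mx: "mu \<le> xm"
  shows "GT xm mu T = integral {0..xm} (\<lambda>\<xi>. max mu \<xi> * gk T \<xi>)"
proof -
  have cont2: "continuous_on {a..b} (\<lambda>\<xi>. max mu \<xi> * gk T \<xi>)" for a b
    using T by (intro continuous_intros gk_cont) auto
  define G where "G = (\<lambda>\<xi>::real. 2 * T * ln (cosh (\<xi> / (2 * T))))"
  have der: "(G has_real_derivative tanh (x / (2 * T))) (at x within A)" for x A
  proof -
    have d1: "((\<lambda>\<xi>. \<xi> / (2 * T)) has_real_derivative 1 / (2 * T)) (at x within A)"
      by (rule div_const_der[OF DERIV_ident])
    have d2: "((\<lambda>\<xi>. cosh (\<xi> / (2 * T))) has_real_derivative sinh (x / (2 * T)) * (1 / (2 * T))) (at x within A)"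
      by (rule cosh_comp_der[OF d1])
    have d3: "((\<lambda>\<xi>. ln (cosh (\<xi> / (2 * T)))) has_real_derivative sinh (x / (2 * T)) * (1 / (2 * T)) / cosh (x / (2 * T))) (at x within A)"
      by (rule ln_comp_der[OF d2]) simp
    have "(G has_real_derivative 2 * T * (sinh (x / (2 * T)) * (1 / (2 * T)) / cosh (x / (2 * T)))) (at x within A)"
      unfolding G_def by (rule DERIV_cmult[OF d3])
    then show ?thesis using T by (simp add: tanh_def)
  qed
  have "((\<lambda>\<xi>. tanh (\<xi> / (2 * T))) has_integral (G xm - G mu)) {mu..xm}"
    by (rule fundamental_theorem_of_calculus[OF mx])
       (use der in \<open>auto simp: has_real_derivative_iff_has_vector_derivative[symmetric]\<close>)
  then have i2: "integral {mu..xm} (\<lambda>\<xi>. max mu \<xi> * gk T \<xi>) = G xm - G mu"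
    by (subst integral_cong[where g = "\<lambda>\<xi>. tanh (\<xi> / (2 * T))"])
       (use mu in \<open>auto intro: integral_unique simp: gk_nz\<close>)
  have i1: "integral {0..mu} (\<lambda>\<xi>. max mu \<xi> * gk T \<xi>) = mu * integral {0..mu} (\<lambda>\<xi>. (1 / \<xi>) * tanh (\<xi> / (2 * T)))"
  proof -
    have "integral {0..mu} (\<lambda>\<xi>. max mu \<xi> * gk T \<xi>) = integral {0..mu} (\<lambda>\<xi>. mu * gk T \<xi>)"
      by (rule integral_cong) auto
    also have "\<dots> = mu * integral {0..mu} (gk T)"
      using integral_mult[of "gk T" "{0..mu}" mu] gk_cont[of T] T integrable_continuous_interval by auto
    also have "integral {0..mu} (gk T) = integral {0..mu} (\<lambda>\<xi>. (1 / \<xi>) * tanh (\<xi> / (2 * T)))"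
      by (rule integral_spike[where S = "{0}"]) (auto simp: gk_nz)
    finally show ?thesis .
  qed
  have comb: "integral {0..mu} (\<lambda>\<xi>. max mu \<xi> * gk T \<xi>) + integral {mu..xm} (\<lambda>\<xi>. max mu \<xi> * gk T \<xi>)
      = integral {0..xm} (\<lambda>\<xi>. max mu \<xi> * gk T \<xi>)"
    by (rule Henstock_Kurzweil_Integration.integral_combine) (use mu mx integrable_continuous_interval[OF cont2] in auto)
  have lnd: "2 * T * ln (cosh (xm / (2 * T)) / cosh (mu / (2 * T))) = G xm - G mu"
    unfolding G_def by (simp add: ln_divide_pos cosh_real_pos algebra_simps)
  show ?thesis unfolding GT_def lnd comb[symmetric] i1 i2 by simp
qed

lemma hT_gk: "D > 0 \<Longrightarrow> hT T D \<xi> = gk T (sqrt (\<xi>\<^sup>2 + D\<^sup>2))"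
  by (simp add: hT_def gk_nz add_nonneg_pos less_imp_neq[symmetric])

definition hdT :: "real \<Rightarrow> real \<Rightarrow> real \<Rightarrow> real" where
  "hdT T D \<xi> = D / sqrt (\<xi>\<^sup>2 + D\<^sup>2) * ((1 - tanh (sqrt (\<xi>\<^sup>2 + D\<^sup>2) / (2 * T)) ^ 2) / (2 * T * sqrt (\<xi>\<^sup>2 + D\<^sup>2))
      - tanh (sqrt (\<xi>\<^sup>2 + D\<^sup>2) / (2 * T)) / (sqrt (\<xi>\<^sup>2 + D\<^sup>2))\<^sup>2)"

lemma hT_der:
  fixes T D \<xi> :: real
  assumes T: "T > 0" and D: "D > 0"
  shows "((\<lambda>D. hT T D \<xi>) has_real_derivative hdT T D \<xi>) (at D within A)"
proof -
  define r where "r = sqrt (\<xi>\<^sup>2 + D\<^sup>2)"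
  have p: "\<xi>\<^sup>2 + D\<^sup>2 > 0" using D by (simp add: add_nonneg_pos)
  have r: "r > 0" unfolding r_def using p by (rule real_sqrt_gt_zero)
  have d0: "((\<lambda>D. sqrt (\<xi>\<^sup>2 + D\<^sup>2)) has_real_derivative D / r) (at D within A)"
    unfolding r_def by (rule sqrt_der[OF p])
  have d1: "((\<lambda>D. sqrt (\<xi>\<^sup>2 + D\<^sup>2) / (2 * T)) has_real_derivative (D / r) / (2 * T)) (at D within A)"
    by (rule div_const_der[OF d0])
  have d2: "((\<lambda>D. tanh (sqrt (\<xi>\<^sup>2 + D\<^sup>2) / (2 * T))) has_real_derivative (1 - tanh (r / (2 * T)) ^ 2) * ((D / r) / (2 * T))) (at D within A)"
    using tanh_comp_der[OF d1] unfolding r_def .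
  have nz: "sqrt (\<xi>\<^sup>2 + D\<^sup>2) \<noteq> 0" using r unfolding r_def by linarith
  have "((\<lambda>D. hT T D \<xi>) has_real_derivative
     ((1 - tanh (r / (2 * T)) ^ 2) * ((D / r) / (2 * T)) * r - tanh (r / (2 * T)) * (D / r)) / (r * r)) (at D within A)"
    using DERIV_divide[OF d2 d0 nz] unfolding hT_def[abs_def] r_def .
  moreover have "((1 - tanh (r / (2 * T)) ^ 2) * ((D / r) / (2 * T)) * r - tanh (r / (2 * T)) * (D / r)) / (r * r)
      = hdT T D \<xi>"
    unfolding hdT_def r_def[symmetric] using r T by (simp add: field_simps power2_eq_square)
  ultimately show ?thesis by simp
qed

lemma hdT_cont:
  assumes T: "T > 0"
  shows "continuous_on ({0<..} \<times> {0..xm}) (\<lambda>(D, \<xi>). max mu \<xi> * hdT T D \<xi>)"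
  unfolding hdT_def split_beta
  by (intro continuous_intros)
     (use T in \<open>auto simp: add_nonneg_pos less_imp_neq[symmetric] cosh_real_pos\<close>)

lemma FTi_der:
  fixes xm mu T D :: real
  assumes T: "T > 0" and D: "D > 0"
  shows "((\<lambda>D. integral {0..xm} (\<lambda>\<xi>. max mu \<xi> * hT T D \<xi>)) has_real_derivative
          integral {0..xm} (\<lambda>\<xi>. max mu \<xi> * hdT T D \<xi>)) (at D)"
proof -
  have "((\<lambda>D. integral (cbox 0 xm) (\<lambda>\<xi>. max mu \<xi> * hT T D \<xi>)) has_real_derivative
          integral (cbox 0 xm) (\<lambda>\<xi>. max mu \<xi> * hdT T D \<xi>)) (at D within {0<..})"
  proof (rule leibniz_rule_field_derivative[where f = "\<lambda>D \<xi>. max mu \<xi> * hT T D \<xi>"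
      and fx = "\<lambda>D \<xi>. max mu \<xi> * hdT T D \<xi>" and ?x0.0 = D and U = "{0<..}"])
    fix x t :: real assume x: "x \<in> {0<..}" "t \<in> cbox 0 xm"
    show "((\<lambda>x. max mu t * hT T x t) has_real_derivative max mu t * hdT T x t) (at x within {0<..})"
    proof -
      have "x > 0" using x by simp
      then show ?thesis by (rule DERIV_cmult[OF hT_der[OF T]])
    qed
  next
    fix x :: real assume x: "x \<in> {0<..}"
    show "(\<lambda>\<xi>. max mu \<xi> * hT T x \<xi>) integrable_on cbox 0 xm"
      unfolding cbox_interval hT_def using x T
      by (intro integrable_continuous_interval continuous_intros)
         (auto simp: add_nonneg_pos less_imp_neq[symmetric] cosh_real_pos)
  next
    show "continuous_on ({0<..} \<times> cbox 0 xm) (\<lambda>(x, t). max mu t * hdT T x t)"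
      unfolding cbox_interval by (rule hdT_cont[OF T])
  qed (use D in auto)
  moreover have "at D within {0<..} = at D" using D by (intro at_within_open) auto
  ultimately show ?thesis by (simp only: cbox_interval)
qed

definition gkd :: "real \<Rightarrow> real \<Rightarrow> real" where
  "gkd T \<xi> = - (1 - tanh (\<xi> / (2 * T)) ^ 2) / (2 * T ^ 2)"

lemma half_der:
  fixes c T :: real assumes T: "T \<noteq> 0"
  shows "((\<lambda>T. c / (2 * T)) has_real_derivative - c / (2 * T ^ 2)) (at T within A)"
proof -
  have d: "((\<lambda>T::real. 2 * T) has_real_derivative 2 * 1) (at T within A)"
    by (rule DERIV_cmult[OF DERIV_ident])
  have nz: "2 * T \<noteq> 0" using T by simp
  have der: "((\<lambda>T. c / (2 * T)) has_real_derivative (0 * (2 * T) - c * (2 * 1)) / ((2 * T) * (2 * T))) (at T within A)"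
    by (rule DERIV_divide[OF DERIV_const d nz])
  have eq: "(0 * (2 * T) - c * (2 * 1)) / ((2 * T) * (2 * T)) = - c / (2 * T ^ 2)"
    using T by (simp add: field_simps power2_eq_square)
  show ?thesis using der unfolding eq .
qed

lemma gk_der:
  fixes T \<xi> :: real assumes T: "T > 0"
  shows "((\<lambda>T. gk T \<xi>) has_real_derivative gkd T \<xi>) (at T within A)"
proof (cases "\<xi> = 0")
  case True
  have e: "(\<lambda>T. gk T \<xi>) = (\<lambda>T. 1 / (2 * T))" using True by (simp add: gk_zero)
  show ?thesis unfolding e using half_der[of T 1 A] T True by (simp add: gkd_def)
next
  case False
  have e: "(\<lambda>T. gk T \<xi>) = (\<lambda>T. tanh (\<xi> / (2 * T)) / \<xi>)" using False by (simp add: gk_nz)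
  have d1: "((\<lambda>T. \<xi> / (2 * T)) has_real_derivative - \<xi> / (2 * T ^ 2)) (at T within A)"
    using half_der[of T \<xi> A] T by simp
  have "((\<lambda>T. tanh (\<xi> / (2 * T)) / \<xi>) has_real_derivative (1 - tanh (\<xi> / (2 * T)) ^ 2) * (- \<xi> / (2 * T ^ 2)) / \<xi>) (at T within A)"
    by (rule div_const_der[OF tanh_comp_der[OF d1]])
  moreover have "(1 - tanh (\<xi> / (2 * T)) ^ 2) * (- \<xi> / (2 * T ^ 2)) / \<xi> = gkd T \<xi>"
    using False T by (simp add: gkd_def field_simps)
  ultimately show ?thesis unfolding e by metis
qed

lemma gkd_cont:
  shows "continuous_on ({0<..} \<times> {0..xm}) (\<lambda>(T, \<xi>). max mu \<xi> * gkd T \<xi>)"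
  unfolding gkd_def split_beta
  by (intro continuous_intros) (auto simp: less_imp_neq[symmetric] cosh_real_pos)

lemma GTi_der:
  fixes xm mu T :: real
  assumes T: "T > 0"
  shows "((\<lambda>T. integral {0..xm} (\<lambda>\<xi>. max mu \<xi> * gk T \<xi>)) has_real_derivative
          integral {0..xm} (\<lambda>\<xi>. max mu \<xi> * gkd T \<xi>)) (at T)"
proof -
  have "((\<lambda>T. integral (cbox 0 xm) (\<lambda>\<xi>. max mu \<xi> * gk T \<xi>)) has_real_derivative
          integral (cbox 0 xm) (\<lambda>\<xi>. max mu \<xi> * gkd T \<xi>)) (at T within {0<..})"
  proof (rule leibniz_rule_field_derivative[where f = "\<lambda>T \<xi>. max mu \<xi> * gk T \<xi>"
      and fx = "\<lambda>T \<xi>. max mu \<xi> * gkd T \<xi>" and ?x0.0 = T and U = "{0<..}"])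
    fix x t :: real assume x: "x \<in> {0<..}" "t \<in> cbox 0 xm"
    have "x > 0" using x by simp
    then show "((\<lambda>x. max mu t * gk x t) has_real_derivative max mu t * gkd x t) (at x within {0<..})"
      by (rule DERIV_cmult[OF gk_der])
  next
    fix x :: real assume x: "x \<in> {0<..}"
    then have "x \<noteq> 0" by simp
    then have "continuous_on {0..xm} (\<lambda>\<xi>. max mu \<xi> * gk x \<xi>)"
      by (intro continuous_intros gk_cont)
    then show "(\<lambda>\<xi>. max mu \<xi> * gk x \<xi>) integrable_on cbox 0 xm"
      unfolding cbox_interval by (rule integrable_continuous_interval)
  next
    show "continuous_on ({0<..} \<times> cbox 0 xm) (\<lambda>(x, t). max mu t * gkd x t)"
      unfolding cbox_interval by (rule gkd_cont)
  qed (use T in simp_all)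
  moreover have "at T within {0<..} = at T" using T by (intro at_within_open) auto
  ultimately show ?thesis by (simp only: cbox_interval)
qed

lemma GT_der:
  fixes xm mu T :: real
  assumes T: "T > 0" and mu: "mu > 0" and mx: "mu \<le> xm"
  shows "(GT xm mu has_real_derivative integral {0..xm} (\<lambda>\<xi>. max mu \<xi> * gkd T \<xi>)) (at T)"
  by (rule has_field_derivative_transform_within_open[OF GTi_der[OF T], where S = "{0<..}"])
     (use T GT_repr[OF _ mu mx] in auto)

lemma FT_der:
  fixes xm mu T D :: real
  assumes T: "T > 0" and D: "D > 0" and mu: "mu > 0" and mx: "mu \<le> xm"
  shows "(FT xm mu T has_real_derivative integral {0..xm} (\<lambda>\<xi>. max mu \<xi> * hdT T D \<xi>)) (at D)"
  by (rule has_field_derivative_transform_within_open[OF FTi_der[OF T D], where S = "{0<..}"])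
     (use D FT_repr[OF T _ mu mx] in auto)

lemma hT_alt: "D > 0 \<Longrightarrow> hT T D \<xi> = tanh (sqrt (\<xi>\<^sup>2 + D\<^sup>2) / (2 * T)) / sqrt (\<xi>\<^sup>2 + D\<^sup>2)"
  by (simp add: hT_def)

lemma hdT_alt:
  assumes T: "T > 0" and D: "D > 0"
  shows "hdT T D \<xi> = D * ((sqrt (\<xi>\<^sup>2 + D\<^sup>2) / (2 * T)) * (1 - tanh (sqrt (\<xi>\<^sup>2 + D\<^sup>2) / (2 * T)) ^ 2)
            - tanh (sqrt (\<xi>\<^sup>2 + D\<^sup>2) / (2 * T))) / sqrt (\<xi>\<^sup>2 + D\<^sup>2) ^ 3"
proof -
  define r where "r = sqrt (\<xi>\<^sup>2 + D\<^sup>2)"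
  have p: "\<xi>\<^sup>2 + D\<^sup>2 > 0" using D by (simp add: add_nonneg_pos)
  have r: "r > 0" unfolding r_def using p by (rule real_sqrt_gt_zero)
  show ?thesis unfolding hdT_def r_def[symmetric] using r T
    by (simp add: field_simps power2_eq_square power3_eq_cube)
qed

lemma hdT_neg:
  assumes T: "T > 0" and D: "D > 0"
  shows "hdT T D \<xi> < 0"
proof -
  define r where "r = sqrt (\<xi>\<^sup>2 + D\<^sup>2)"
  have p: "\<xi>\<^sup>2 + D\<^sup>2 > 0" using D by (simp add: add_nonneg_pos)
  have r: "r > 0" unfolding r_def using p by (rule real_sqrt_gt_zero)
  have y: "r / (2 * T) > 0" using r T by simp
  have k: "(r / (2 * T)) * (1 - tanh (r / (2 * T)) ^ 2) - tanh (r / (2 * T)) < 0"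
    using tanh_key[OF y] by simp
  have "D * ((r / (2 * T)) * (1 - tanh (r / (2 * T)) ^ 2) - tanh (r / (2 * T))) < 0"
    using D k by (simp add: mult_pos_neg)
  then have "D * ((r / (2 * T)) * (1 - tanh (r / (2 * T)) ^ 2) - tanh (r / (2 * T))) / r ^ 3 < 0"
    using r by (simp add: divide_neg_pos)
  then show ?thesis unfolding hdT_alt[OF T D] r_def .
qed

lemma hT_hdT_pos:
  assumes T: "T > 0" and D: "D > 0"
  shows "hT T D \<xi> + D * hdT T D \<xi> > 0"
proof -
  define r where "r = sqrt (\<xi>\<^sup>2 + D\<^sup>2)"
  define y where "y = r / (2 * T)"
  define t where "t = tanh y"
  have p: "\<xi>\<^sup>2 + D\<^sup>2 > 0" using D by (simp add: add_nonneg_pos)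
  have r: "r > 0" "r\<^sup>2 = \<xi>\<^sup>2 + D\<^sup>2" unfolding r_def using p by auto
  have y: "y > 0" using r T by (simp add: y_def)
  have t: "t > 0" "t\<^sup>2 < 1" using y tanh_sq_lt1 by (auto simp: t_def)
  have e: "hT T D \<xi> + D * hdT T D \<xi> = (t * \<xi>\<^sup>2 + D\<^sup>2 * (y * (1 - t\<^sup>2))) / r ^ 3"
  proof -
    have "hT T D \<xi> + D * hdT T D \<xi> = t / r + D * (D * (y * (1 - t\<^sup>2) - t) / r ^ 3)"
      unfolding hT_alt[OF D] hdT_alt[OF T D] r_def[symmetric] y_def[symmetric] t_def[symmetric] ..
    also have "\<dots> = (t * r\<^sup>2 + D\<^sup>2 * (y * (1 - t\<^sup>2) - t)) / r ^ 3"
      using r(1) by (simp add: field_simps power2_eq_square power3_eq_cube)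
    also have "\<dots> = (t * \<xi>\<^sup>2 + D\<^sup>2 * (y * (1 - t\<^sup>2))) / r ^ 3"
      using r(2) by (simp add: algebra_simps)
    finally show ?thesis .
  qed
  have "t * \<xi>\<^sup>2 \<ge> 0" using t by simp
  moreover have "D\<^sup>2 * (y * (1 - t\<^sup>2)) > 0" using D y t by simp
  ultimately have "t * \<xi>\<^sup>2 + D\<^sup>2 * (y * (1 - t\<^sup>2)) > 0" by linarith
  then show ?thesis unfolding e using r by simp
qed

lemma gkd_neg: "T > 0 \<Longrightarrow> gkd T \<xi> < 0"
  using tanh_sq_lt1[of "\<xi> / (2 * T)"] by (simp add: gkd_def divide_neg_pos)

lemma gk_gkd_nonneg:
  assumes T: "T > 0" and xi: "\<xi> \<ge> 0"
  shows "gk T \<xi> + T * gkd T \<xi> \<ge> 0" and "\<xi> > 0 \<Longrightarrow> gk T \<xi> + T * gkd T \<xi> > 0"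
proof -
  define y where "y = \<xi> / (2 * T)"
  have e: "gk T \<xi> + T * gkd T \<xi> = (S y - (1 - tanh y ^ 2)) / (2 * T)"
    unfolding gk_def gkd_def y_def[symmetric] using T by (simp add: field_simps power2_eq_square)
  have pos: "S y - (1 - tanh y ^ 2) > 0" if "\<xi> > 0"
  proof -
    have y0: "y > 0" using that T by (simp add: y_def)
    have "y * (1 - tanh y ^ 2) < tanh y" by (rule tanh_key[OF y0])
    then have "1 - tanh y ^ 2 < tanh y / y" using y0 by (simp add: field_simps)
    then show ?thesis using y0 by (simp add: S_def)
  qed
  show "\<xi> > 0 \<Longrightarrow> gk T \<xi> + T * gkd T \<xi> > 0" unfolding e using pos T by simp
  show "gk T \<xi> + T * gkd T \<xi> \<ge> 0"
  proof (cases "\<xi> = 0")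
    case True then show ?thesis unfolding e by (simp add: y_def S_def)
  next
    case False then show ?thesis unfolding e using pos xi T by (simp add: less_imp_le)
  qed
qed

lemma cont_hT:
  assumes T: "T > 0" and D: "D > 0"
  shows "continuous_on {a..b} (\<lambda>\<xi>. max mu \<xi> * hT T D \<xi>)"
  unfolding hT_def using D T
  by (intro continuous_intros) (auto simp: add_nonneg_pos less_imp_neq[symmetric] cosh_real_pos)

lemma cont_hdT:
  assumes T: "T > 0" and D: "D > 0"
  shows "continuous_on {a..b} (\<lambda>\<xi>. max mu \<xi> * hdT T D \<xi>)"
  unfolding hdT_def using D T
  by (intro continuous_intros) (auto simp: add_nonneg_pos less_imp_neq[symmetric] cosh_real_pos)

lemma cont_gkd:
  assumes T: "T > 0"
  shows "continuous_on {a..b} (\<lambda>\<xi>. max mu \<xi> * gkd T \<xi>)"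
  unfolding gkd_def using T
  by (intro continuous_intros) (auto simp: less_imp_neq[symmetric] cosh_real_pos)

lemma cont_gk:
  assumes T: "T > 0"
  shows "continuous_on {a..b} (\<lambda>\<xi>. max mu \<xi> * gk T \<xi>)"
  using T by (intro continuous_intros gk_cont) auto

lemma int_neg_lemma:
  fixes f :: "real \<Rightarrow> real"
  assumes xm: "xm > 0" and c: "continuous_on {0..xm} f" and neg: "\<And>x. x \<in> {0..xm} \<Longrightarrow> f x < 0"
  shows "integral {0..xm} f < 0"
proof -
  have "integral {0..xm} (\<lambda>x. - f x) > 0"
    by (rule int_pos[OF xm]) (use c neg xm in \<open>auto intro!: continuous_intros less_imp_le\<close>)
  then show ?thesis unfolding integral_neg by simp
qed

lemma int_comb_lemma:
  fixes f g :: "real \<Rightarrow> real"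
  assumes cf: "continuous_on {0..xm} f" and cg: "continuous_on {0..xm} g"
  shows "integral {0..xm} f + D * integral {0..xm} g = integral {0..xm} (\<lambda>x. f x + D * g x)"
proof -
  have i1: "f integrable_on {0..xm}" using cf by (rule integrable_continuous_interval)
  have i2: "g integrable_on {0..xm}" using cg by (rule integrable_continuous_interval)
  have i3: "(\<lambda>x. D * g x) integrable_on {0..xm}" using cg by (intro integrable_continuous_interval continuous_intros)
  have "D * integral {0..xm} g = integral {0..xm} (\<lambda>x. D * g x)" by (rule integral_mult[OF i2])
  moreover have "integral {0..xm} (\<lambda>x. f x + D * g x) = integral {0..xm} f + integral {0..xm} (\<lambda>x. D * g x)"
    by (rule integral_add[OF i1 i3])
  ultimately show ?thesis by simp
qed

lemma FT_signs:
  fixes xm mu T D :: real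
  assumes T: "T > 0" and D: "D > 0" and mu: "mu > 0" and mx: "mu \<le> xm"
  shows "integral {0..xm} (\<lambda>\<xi>. max mu \<xi> * hdT T D \<xi>) < 0"
    and "FT xm mu T D + D * integral {0..xm} (\<lambda>\<xi>. max mu \<xi> * hdT T D \<xi>) > 0"
proof -
  have xm: "xm > 0" using mu mx by simp
  show "integral {0..xm} (\<lambda>\<xi>. max mu \<xi> * hdT T D \<xi>) < 0"
  proof (rule int_neg_lemma[OF xm cont_hdT[OF T D]])
    fix x assume "x \<in> {0..xm}"
    have "max mu x > 0" using mu by simp
    then show "max mu x * hdT T D x < 0" using hdT_neg[OF T D] by (simp add: mult_pos_neg)
  qed
  have "FT xm mu T D + D * integral {0..xm} (\<lambda>\<xi>. max mu \<xi> * hdT T D \<xi>)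
      = integral {0..xm} (\<lambda>\<xi>. max mu \<xi> * hT T D \<xi> + D * (max mu \<xi> * hdT T D \<xi>))"
    unfolding FT_repr[OF T D mu mx] by (rule int_comb_lemma[OF cont_hT[OF T D] cont_hdT[OF T D]])
  also have "\<dots> > 0"
  proof (rule int_pos[OF xm])
    show "continuous_on {0..xm} (\<lambda>\<xi>. max mu \<xi> * hT T D \<xi> + D * (max mu \<xi> * hdT T D \<xi>))"
      by (intro continuous_intros cont_hT[OF T D] cont_hdT[OF T D])
    have pos: "max mu x * hT T D x + D * (max mu x * hdT T D x) > 0" for x
    proof -
      have "max mu x * hT T D x + D * (max mu x * hdT T D x) = max mu x * (hT T D x + D * hdT T D x)"
        by (simp add: algebra_simps)
      moreover have "max mu x > 0" using mu by simp
      ultimately show ?thesis using hT_hdT_pos[OF T D, of x] by simp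
    qed
    show "\<And>x. x \<in> {0..xm} \<Longrightarrow> 0 \<le> max mu x * hT T D x + D * (max mu x * hdT T D x)"
      using pos less_imp_le by blast
    show "0 < max mu xm * hT T D xm + D * (max mu xm * hdT T D xm)" by (rule pos)
  qed
  finally show "FT xm mu T D + D * integral {0..xm} (\<lambda>\<xi>. max mu \<xi> * hdT T D \<xi>) > 0" .
qed

lemma GT_signs:
  fixes xm mu T :: real
  assumes T: "T > 0" and mu: "mu > 0" and mx: "mu \<le> xm"
  shows "integral {0..xm} (\<lambda>\<xi>. max mu \<xi> * gkd T \<xi>) < 0"
    and "GT xm mu T + T * integral {0..xm} (\<lambda>\<xi>. max mu \<xi> * gkd T \<xi>) > 0"
proof -
  have xm: "xm > 0" using mu mx by simp
  show "integral {0..xm} (\<lambda>\<xi>. max mu \<xi> * gkd T \<xi>) < 0"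
  proof (rule int_neg_lemma[OF xm cont_gkd[OF T]])
    fix x assume "x \<in> {0..xm}"
    have "max mu x > 0" using mu by simp
    then show "max mu x * gkd T x < 0" using gkd_neg[OF T] by (simp add: mult_pos_neg)
  qed
  have "GT xm mu T + T * integral {0..xm} (\<lambda>\<xi>. max mu \<xi> * gkd T \<xi>)
      = integral {0..xm} (\<lambda>\<xi>. max mu \<xi> * gk T \<xi> + T * (max mu \<xi> * gkd T \<xi>))"
    unfolding GT_repr[OF T mu mx] by (rule int_comb_lemma[OF cont_gk[OF T] cont_gkd[OF T]])
  also have "\<dots> > 0"
  proof (rule int_pos[OF xm])
    show "continuous_on {0..xm} (\<lambda>\<xi>. max mu \<xi> * gk T \<xi> + T * (max mu \<xi> * gkd T \<xi>))"
      by (intro continuous_intros cont_gk[OF T] cont_gkd[OF T])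
    have eq: "max mu x * gk T x + T * (max mu x * gkd T x) = max mu x * (gk T x + T * gkd T x)" for x
      by (simp add: algebra_simps)
    have mp: "max mu x > 0" for x using mu by simp
    show "\<And>x. x \<in> {0..xm} \<Longrightarrow> 0 \<le> max mu x * gk T x + T * (max mu x * gkd T x)"
      unfolding eq using gk_gkd_nonneg(1)[OF T] mp by (simp add: less_imp_le)
    show "0 < max mu xm * gk T xm + T * (max mu xm * gkd T xm)"
      unfolding eq using gk_gkd_nonneg(2)[OF T _ xm] mp xm by simp
  qed
  finally show "GT xm mu T + T * integral {0..xm} (\<lambda>\<xi>. max mu \<xi> * gkd T \<xi>) > 0" .
qed

lemma gk_bounds:
  assumes T: "T > 0" and s: "s \<ge> 0"
  shows "gk T s > 0" "gk T s \<le> 1 / (2 * T)"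
proof -
  have "S (s / (2 * T)) > 0" by (rule S_pos)
  then show "gk T s > 0" using T by (simp add: gk_def)
  have "S (s / (2 * T)) \<le> 1" using s T by (intro S_le1) simp
  then show "gk T s \<le> 1 / (2 * T)" using T by (simp add: gk_def divide_right_mono)
qed

lemma gk_antimono:
  assumes T: "T > 0" and ab: "0 \<le> a" "a \<le> b"
  shows "gk T b \<le> gk T a"
proof (cases "a = b")
  case False
  then have "S (b / (2 * T)) < S (a / (2 * T))" using T ab by (intro S_mono) (auto simp: divide_strict_right_mono)
  then show ?thesis using T by (simp add: gk_def divide_right_mono)
qed simp

lemma gk_lip:
  assumes T: "T > 0" and ab: "0 \<le> a" "a \<le> b"
  shows "gk T a - gk T b \<le> (b - a) / (4 * T ^ 2)"
proof -
  have "S (a / (2 * T)) - S (b / (2 * T)) \<le> b / (2 * T) - a / (2 * T)"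
    using T ab by (intro S_lip) (auto simp: divide_right_mono)
  then have "(S (a / (2 * T)) - S (b / (2 * T))) / (2 * T) \<le> (b / (2 * T) - a / (2 * T)) / (2 * T)"
    using T by (intro divide_right_mono) auto
  moreover have "(b / (2 * T) - a / (2 * T)) / (2 * T) = (b - a) / (4 * T ^ 2)"
    using T by (simp add: field_simps power2_eq_square)
  moreover have "gk T a - gk T b = (S (a / (2 * T)) - S (b / (2 * T))) / (2 * T)"
    by (simp add: gk_def diff_divide_distrib)
  ultimately show ?thesis by simp
qed

lemma hT_le:
  assumes T: "T > 0" and D: "D > 0"
  shows "hT T D \<xi> \<le> 1 / D" "hT T D \<xi> \<ge> 0"
proof -
  define r where "r = sqrt (\<xi>\<^sup>2 + D\<^sup>2)"
  have p: "\<xi>\<^sup>2 + D\<^sup>2 > 0" using D by (simp add: add_nonneg_pos)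
  have r: "r > 0" unfolding r_def using p by (rule real_sqrt_gt_zero)
  have Dr: "D \<le> r" unfolding r_def by (rule real_le_rsqrt) simp
  have t: "tanh (r / (2 * T)) < 1" "tanh (r / (2 * T)) > 0" using r T by (auto simp: tanh_real_lt_1)
  have "tanh (r / (2 * T)) / r \<le> 1 / r" using t r by (intro divide_right_mono) auto
  also have "\<dots> \<le> 1 / D" using Dr D by (intro divide_left_mono) auto
  finally show "hT T D \<xi> \<le> 1 / D" by (simp add: hT_def r_def)
  show "hT T D \<xi> \<ge> 0" using t r by (simp add: hT_def r_def[symmetric])
qed

lemma int_le_const:
  fixes f :: "real \<Rightarrow> real"
  assumes xm: "xm \<ge> 0" and c: "continuous_on {0..xm} f" and le: "\<And>x. x \<in> {0..xm} \<Longrightarrow> f x \<le> K"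
  shows "integral {0..xm} f \<le> xm * K"
proof -
  have "integral {0..xm} f \<le> integral {0..xm} (\<lambda>x. K)"
    by (rule integral_le) (use c le in \<open>auto intro: integrable_continuous_interval\<close>)
  also have "\<dots> = xm * K" using xm by simp
  finally show ?thesis .
qed

lemma GT_up:
  assumes T: "T > 0" and mu: "mu > 0" and mx: "mu \<le> xm"
  shows "GT xm mu T \<le> xm\<^sup>2 / (2 * T)"
proof -
  have "GT xm mu T \<le> xm * (xm * (1 / (2 * T)))"
    unfolding GT_repr[OF T mu mx]
  proof (rule int_le_const[OF _ cont_gk[OF T]])
    show "0 \<le> xm" using mu mx by simp
    fix x assume x: "x \<in> {0..xm}"
    then have "max mu x \<le> xm" "max mu x \<ge> 0" using mx mu by auto
    moreover have "gk T x \<le> 1 / (2 * T)" "gk T x \<ge> 0" using gk_bounds[OF T] x by (auto simp: less_imp_le)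
    ultimately show "max mu x * gk T x \<le> xm * (1 / (2 * T))" by (intro mult_mono) auto
  qed
  then show ?thesis by (simp add: power2_eq_square)
qed

lemma FT_up:
  assumes T: "T > 0" and D: "D > 0" and mu: "mu > 0" and mx: "mu \<le> xm"
  shows "FT xm mu T D \<le> xm\<^sup>2 / D"
proof -
  have "FT xm mu T D \<le> xm * (xm * (1 / D))"
    unfolding FT_repr[OF T D mu mx]
  proof (rule int_le_const[OF _ cont_hT[OF T D]])
    show "0 \<le> xm" using mu mx by simp
    fix x assume x: "x \<in> {0..xm}"
    then have "max mu x \<le> xm" "max mu x \<ge> 0" using mx mu by auto
    moreover have "hT T D x \<le> 1 / D" "hT T D x \<ge> 0" using hT_le[OF T D] by auto
    ultimately show "max mu x * hT T D x \<le> xm * (1 / D)" by (intro mult_mono) auto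
  qed
  then show ?thesis by (simp add: power2_eq_square)
qed

lemma sqrt_le_sum: "x \<ge> 0 \<Longrightarrow> D > 0 \<Longrightarrow> sqrt (x\<^sup>2 + D\<^sup>2) \<le> x + (D::real)"
proof -
  assume x: "x \<ge> 0" and D: "D > 0"
  have "sqrt (x\<^sup>2 + D\<^sup>2) \<le> sqrt ((x + D)\<^sup>2)"
    by (rule real_sqrt_le_mono) (use x D in \<open>simp add: power2_eq_square algebra_simps\<close>)
  then show ?thesis using x D by simp
qed

lemma FT_GT:
  assumes T: "T > 0" and D: "D > 0" and mu: "mu > 0" and mx: "mu \<le> xm"
  shows "FT xm mu T D \<le> GT xm mu T" "GT xm mu T - FT xm mu T D \<le> xm\<^sup>2 * D / (4 * T ^ 2)"
proof -
  have hg: "hT T D x = gk T (sqrt (x\<^sup>2 + D\<^sup>2))" for x using hT_gk[OF D] .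
  have ge: "x \<le> sqrt (x\<^sup>2 + D\<^sup>2)" if "x \<ge> 0" for x :: real
    using that by (intro real_le_rsqrt) simp
  have i1: "(\<lambda>\<xi>. max mu \<xi> * hT T D \<xi>) integrable_on {0..xm}"
    by (rule integrable_continuous_interval[OF cont_hT[OF T D]])
  have i2: "(\<lambda>\<xi>. max mu \<xi> * gk T \<xi>) integrable_on {0..xm}"
    by (rule integrable_continuous_interval[OF cont_gk[OF T]])
  show "FT xm mu T D \<le> GT xm mu T"
    unfolding FT_repr[OF T D mu mx] GT_repr[OF T mu mx]
  proof (rule integral_le[OF i1 i2])
    fix x assume x: "x \<in> {0..xm}"
    have "gk T (sqrt (x\<^sup>2 + D\<^sup>2)) \<le> gk T x" using x ge[of x] by (intro gk_antimono[OF T]) auto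
    moreover have "max mu x \<ge> 0" using mu by simp
    ultimately show "max mu x * hT T D x \<le> max mu x * gk T x" unfolding hg by (rule mult_left_mono)
  qed
  have "GT xm mu T - FT xm mu T D = integral {0..xm} (\<lambda>\<xi>. max mu \<xi> * gk T \<xi> - max mu \<xi> * hT T D \<xi>)"
    unfolding FT_repr[OF T D mu mx] GT_repr[OF T mu mx] by (rule integral_diff[OF i2 i1, symmetric])
  also have "\<dots> \<le> xm * (xm * (D / (4 * T ^ 2)))"
  proof (rule int_le_const)
    show "0 \<le> xm" using mu mx by simp
    show "continuous_on {0..xm} (\<lambda>\<xi>. max mu \<xi> * gk T \<xi> - max mu \<xi> * hT T D \<xi>)"
      by (intro continuous_intros cont_gk[OF T] cont_hT[OF T D])
    fix x assume x: "x \<in> {0..xm}"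
    have "gk T x - gk T (sqrt (x\<^sup>2 + D\<^sup>2)) \<le> (sqrt (x\<^sup>2 + D\<^sup>2) - x) / (4 * T ^ 2)"
      using x ge[of x] by (intro gk_lip[OF T]) auto
    also have "\<dots> \<le> D / (4 * T ^ 2)" using sqrt_le_sum[of x D] x D by (intro divide_right_mono) auto
    finally have a: "gk T x - hT T D x \<le> D / (4 * T ^ 2)" unfolding hg .
    have b: "gk T x - hT T D x \<ge> 0" using gk_antimono[OF T, of x "sqrt (x\<^sup>2 + D\<^sup>2)"] x ge[of x] unfolding hg by auto
    have "max mu x * gk T x - max mu x * hT T D x = max mu x * (gk T x - hT T D x)" by (simp add: algebra_simps)
    also have "\<dots> \<le> xm * (D / (4 * T ^ 2))" using a b x mx mu by (intro mult_mono) auto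
    finally show "max mu x * gk T x - max mu x * hT T D x \<le> xm * (D / (4 * T ^ 2))" .
  qed
  finally show "GT xm mu T - FT xm mu T D \<le> xm\<^sup>2 * D / (4 * T ^ 2)" by (simp add: power2_eq_square)
qed

lemma GT_low:
  assumes T: "T > 0" and T2: "2 * T \<le> mu" and mu: "mu > 0" and mx: "mu \<le> xm"
  shows "GT xm mu T \<ge> mu * tanh 1 * (ln mu - ln (2 * T))"
proof -
  define f where "f = (\<lambda>\<xi>. max mu \<xi> * gk T \<xi>)"
  have cf: "continuous_on {a..b} f" for a b unfolding f_def by (rule cont_gk[OF T])
  have fnn: "f x \<ge> 0" if "x \<ge> 0" for x
    using gk_bounds(1)[OF T that] mu unfolding f_def by (simp add: less_imp_le)
  have sub: "integral {2 * T..mu} f \<le> integral {0..xm} f"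
    by (rule integral_subset_le) (use T mx cf fnn in \<open>auto intro: integrable_continuous_interval\<close>)
  define c where "c = mu * tanh 1"
  have der: "((\<lambda>\<xi>. c * ln \<xi>) has_vector_derivative c * (1 / x)) (at x within {2 * T..mu})"
    if "x \<in> {2 * T..mu}" for x
  proof -
    have "x > 0" using that T by auto
    then have "((\<lambda>\<xi>. c * ln \<xi>) has_real_derivative c * (1 / x)) (at x)"
      by (intro DERIV_cmult DERIV_ln_divide)
    then show ?thesis
      by (simp add: has_real_derivative_iff_has_vector_derivative[symmetric] has_field_derivative_at_within)
  qed
  have hi: "((\<lambda>\<xi>. c * (1 / \<xi>)) has_integral (c * ln mu - c * ln (2 * T))) {2 * T..mu}"
    by (rule fundamental_theorem_of_calculus[OF T2 der])
  have "integral {2 * T..mu} (\<lambda>\<xi>. c * (1 / \<xi>)) \<le> integral {2 * T..mu} f"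
  proof (rule integral_le)
    show "(\<lambda>\<xi>. c * (1 / \<xi>)) integrable_on {2 * T..mu}" using hi by blast
    show "f integrable_on {2 * T..mu}" using cf by (rule integrable_continuous_interval)
    fix x assume x: "x \<in> {2 * T..mu}"
    then have x0: "x > 0" and x1: "1 \<le> x / (2 * T)" using T by auto
    have "tanh 1 \<le> tanh (x / (2 * T))" using x1 by simp
    then have "tanh 1 / x \<le> tanh (x / (2 * T)) / x" using x0 by (intro divide_right_mono) auto
    then have "mu * (tanh 1 / x) \<le> mu * (tanh (x / (2 * T)) / x)" using mu by (intro mult_left_mono) auto
    moreover have "max mu x = mu" using x by auto
    moreover have "gk T x = tanh (x / (2 * T)) / x" using x0 by (simp add: gk_nz)
    ultimately show "c * (1 / x) \<le> f x" unfolding f_def c_def by simp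
  qed
  moreover have "integral {2 * T..mu} (\<lambda>\<xi>. c * (1 / \<xi>)) = c * ln mu - c * ln (2 * T)"
    using hi by (rule integral_unique)
  ultimately have "c * ln mu - c * ln (2 * T) \<le> integral {0..xm} f" using sub by linarith
  then show ?thesis unfolding GT_repr[OF T mu mx] f_def[symmetric] c_def by (simp add: algebra_simps)
qed

lemma GT_facts:
  assumes mu: "mu > 0" and mx: "mu \<le> xm"
  shows "\<And>x. x > 0 \<Longrightarrow> GT xm mu x > 0"
    and "\<And>x y. 0 < x \<Longrightarrow> x < y \<Longrightarrow> GT xm mu y < GT xm mu x"
    and "\<And>x y. 0 < x \<Longrightarrow> x \<le> y \<Longrightarrow> x * GT xm mu x \<le> y * GT xm mu y"
    and "\<And>x. x > 0 \<Longrightarrow> isCont (GT xm mu) x"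
  using pkg_props[of "GT xm mu" "\<lambda>T. integral {0..xm} (\<lambda>\<xi>. max mu \<xi> * gkd T \<xi>)"]
    GT_der[OF _ mu mx] GT_signs[OF _ mu mx] by blast+

lemma Tc_props:
  fixes xm lam mu :: real
  assumes "xm > 0" and "lam > 0" and mu: "0 < mu" and mx: "mu \<le> xm"
  shows "Tc xm lam mu > 0" "GT xm mu (Tc xm lam mu) = xm / lam"
    "\<And>T. T > 0 \<Longrightarrow> GT xm mu T = xm / lam \<longleftrightarrow> T = Tc xm lam mu"
proof -
  define K where "K = xm / lam"
  have K: "K > 0" using assms by (simp add: K_def)
  note P = GT_facts[OF mu mx]
  have t1: "tanh (1::real) > 0" by simp
  define T1 where "T1 = mu / 2 * exp (- K / (mu * tanh 1))"
  define T2 where "T2 = xm\<^sup>2 / (2 * K)"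
  have T1: "T1 > 0" using mu by (simp add: T1_def)
  have T2: "T2 > 0" using assms K by (simp add: T2_def)
  have "GT xm mu T1 \<ge> K"
  proof -
    have e: "exp (- K / (mu * tanh 1)) \<le> 1" using K mu t1 by simp
    have "2 * T1 \<le> mu" using mu e by (simp add: T1_def)
    then have "GT xm mu T1 \<ge> mu * tanh 1 * (ln mu - ln (2 * T1))" by (rule GT_low[OF T1 _ mu mx])
    moreover have "ln mu - ln (2 * T1) = K / (mu * tanh 1)"
      using mu by (simp add: T1_def ln_mult)
    ultimately show ?thesis using mu t1 by simp
  qed
  moreover have "GT xm mu T2 \<le> K"
    using GT_up[OF T2 mu mx] K assms by (simp add: T2_def)
  ultimately obtain L where L: "L > 0" "GT xm mu L = K" "\<forall>D>0. GT xm mu D = K \<longleftrightarrow> D = L"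
    using root_exists[OF P(2) P(4) T1 _ T2] by blast
  have "Tc xm lam mu = L"
    unfolding Tc_def K_def[symmetric]
    by (rule the_equality) (use L in auto)
  then show "Tc xm lam mu > 0" "GT xm mu (Tc xm lam mu) = xm / lam"
    "\<And>T. T > 0 \<Longrightarrow> GT xm mu T = xm / lam \<longleftrightarrow> T = Tc xm lam mu"
    using L K_def by auto
qed

lemma part_iii:
  fixes xm lam mu :: real
  assumes xm: "xm > 0" and lam: "lam > 0" and mu: "0 < mu" and mx: "mu \<le> xm"
  shows "\<forall>\<tau> :: nat \<Rightarrow> real. \<tau> 0 > 0 \<and> (\<forall>n. \<tau> (Suc n) = lam / xm * \<tau> n * GT xm mu (\<tau> n)) \<longrightarrow>
       (incseq \<tau> \<or> decseq \<tau>) \<and> \<tau> \<longlonglongrightarrow> Tc xm lam mu \<and>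
       ((\<forall>n. \<tau> n \<noteq> Tc xm lam mu) \<longrightarrow> lin_conv \<tau> (Tc xm lam mu))"
proof (intro allI impI)
  fix u :: "nat \<Rightarrow> real"
  assume u: "u 0 > 0 \<and> (\<forall>n. u (Suc n) = lam / xm * u n * GT xm mu (u n))"
  have c: "lam / xm > 0" using xm lam by simp
  note TP = Tc_props[OF xm lam mu mx]
  show "(incseq u \<or> decseq u) \<and> u \<longlonglongrightarrow> Tc xm lam mu \<and> ((\<forall>n. u n \<noteq> Tc xm lam mu) \<longrightarrow> lin_conv u (Tc xm lam mu))"
  proof (rule pkg_fix[OF c])
    show "\<And>x. x > 0 \<Longrightarrow> (GT xm mu has_real_derivative integral {0..xm} (\<lambda>\<xi>. max mu \<xi> * gkd x \<xi>)) (at x)"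
      using GT_der[OF _ mu mx] by blast
    show "\<And>x. x > 0 \<Longrightarrow> integral {0..xm} (\<lambda>\<xi>. max mu \<xi> * gkd x \<xi>) < 0"
      using GT_signs(1)[OF _ mu mx] by blast
    show "\<And>x. x > 0 \<Longrightarrow> GT xm mu x + x * integral {0..xm} (\<lambda>\<xi>. max mu \<xi> * gkd x \<xi>) > 0"
      using GT_signs(2)[OF _ mu mx] by blast
    show "Tc xm lam mu > 0" by (rule TP(1))
    show "GT xm mu (Tc xm lam mu) = 1 / (lam / xm)" using TP(2) by simp
    show "u 0 > 0" using u by blast
    show "\<And>n. u (Suc n) = lam / xm * u n * GT xm mu (u n)" using u by blast
  qed
qed

lemma part_ii:
  fixes xm lam mu :: real
  assumes xm: "xm > 0" and lam: "lam > 0" and mu: "0 < mu" and mx: "mu \<le> xm"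
  shows "\<forall>T > 0. \<forall>u :: nat \<Rightarrow> real. u 0 > 0 \<and> (\<forall>n. u (Suc n) = lam / xm * u n * FT xm mu T (u n)) \<longrightarrow>
       (incseq u \<or> decseq u) \<and>
       (\<exists>L. u \<longlonglongrightarrow> L \<and> L \<ge> 0 \<and>
          (T < Tc xm lam mu \<longrightarrow> L > 0 \<and> (\<forall>D>0. xm / lam = FT xm mu T D \<longleftrightarrow> D = L) \<and>
               ((\<forall>n. u n \<noteq> L) \<longrightarrow> lin_conv u L)) \<and>
          (T \<ge> Tc xm lam mu \<longrightarrow> L = 0 \<and> \<not> (\<exists>D>0. xm / lam = FT xm mu T D)))"
proof (intro allI impI)
  fix T :: real and u :: "nat \<Rightarrow> real"
  assume T: "T > 0"
  assume u: "u 0 > 0 \<and> (\<forall>n. u (Suc n) = lam / xm * u n * FT xm mu T (u n))"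
  have u0: "u 0 > 0" and rec: "\<And>n. u (Suc n) = lam / xm * u n * FT xm mu T (u n)" using u by auto
  define K where "K = xm / lam"
  have K: "K > 0" using xm lam by (simp add: K_def)
  have c: "lam / xm > 0" "1 / (lam / xm) = K" using xm lam by (auto simp: K_def)
  note TP = Tc_props[OF xm lam mu mx]
  note GP = GT_facts[OF mu mx]
  define F' where "F' = (\<lambda>D. integral {0..xm} (\<lambda>\<xi>. max mu \<xi> * hdT T D \<xi>))"
  have der: "\<And>x. x > 0 \<Longrightarrow> (FT xm mu T has_real_derivative F' x) (at x)"
    unfolding F'_def using FT_der[OF T _ mu mx] by blast
  have neg: "\<And>x. x > 0 \<Longrightarrow> F' x < 0" unfolding F'_def using FT_signs(1)[OF T _ mu mx] by blast
  have pos: "\<And>x. x > 0 \<Longrightarrow> FT xm mu T x + x * F' x > 0" unfolding F'_def using FT_signs(2)[OF T _ mu mx] by blast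
  note P = pkg_props[OF der neg pos]
  show "(incseq u \<or> decseq u) \<and>
       (\<exists>L. u \<longlonglongrightarrow> L \<and> L \<ge> 0 \<and>
          (T < Tc xm lam mu \<longrightarrow> L > 0 \<and> (\<forall>D>0. xm / lam = FT xm mu T D \<longleftrightarrow> D = L) \<and>
               ((\<forall>n. u n \<noteq> L) \<longrightarrow> lin_conv u L)) \<and>
          (T \<ge> Tc xm lam mu \<longrightarrow> L = 0 \<and> \<not> (\<exists>D>0. xm / lam = FT xm mu T D)))"
  proof (cases "T < Tc xm lam mu")
    case True
    have GTg: "GT xm mu T > K" using GP(2)[OF T True] TP(2) by (simp add: K_def)
    define D1 where "D1 = (GT xm mu T - K) * (4 * T ^ 2) / xm\<^sup>2"
    define D2 where "D2 = xm\<^sup>2 / K"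
    have D1: "D1 > 0" using GTg T xm by (simp add: D1_def)
    have D2: "D2 > 0" using K xm by (simp add: D2_def)
    have "FT xm mu T D1 \<ge> K"
    proof -
      have "GT xm mu T - FT xm mu T D1 \<le> xm\<^sup>2 * D1 / (4 * T ^ 2)" by (rule FT_GT(2)[OF T D1 mu mx])
      also have "xm\<^sup>2 * D1 / (4 * T ^ 2) = GT xm mu T - K" using xm T by (simp add: D1_def)
      finally show ?thesis by simp
    qed
    moreover have "FT xm mu T D2 \<le> K" using FT_up[OF T D2 mu mx] K xm by (simp add: D2_def)
    ultimately obtain L where L: "L > 0" "FT xm mu T L = K" "\<forall>D>0. FT xm mu T D = K \<longleftrightarrow> D = L"
      using root_exists[OF P(2) P(4) D1 _ D2] by blast
    have LK: "FT xm mu T L = 1 / (lam / xm)" using L(2) c(2) by simp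
    have rec': "\<And>n. u (Suc n) = (lam / xm) * u n * FT xm mu T (u n)" by (rule rec)
    have A: "(incseq u \<or> decseq u) \<and> u \<longlonglongrightarrow> L \<and> ((\<forall>n. u n \<noteq> L) \<longrightarrow> lin_conv u L)"
      by (rule pkg_fix[OF c(1) der neg pos L(1) LK u0 rec'])
    have B: "\<forall>D>0. xm / lam = FT xm mu T D \<longleftrightarrow> D = L" using L(3) K_def by auto
    show ?thesis using A B L True by auto
  next
    case False
    then have Tge: "T \<ge> Tc xm lam mu" by simp
    have GTle: "GT xm mu T \<le> K"
    proof (cases "T = Tc xm lam mu")
      case True then show ?thesis using TP(2) by (simp add: K_def)
    next
      case False
      then have "Tc xm lam mu < T" using Tge by simp
      then show ?thesis using GP(2)[OF TP(1)] TP(2) by (simp add: K_def less_imp_le)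
    qed
    have small: "FT xm mu T x < 1 / (lam / xm)" if x: "x > 0" for x
    proof -
      have "FT xm mu T x < FT xm mu T (x / 2)" using P(2)[of "x / 2" x] x by simp
      also have "\<dots> \<le> GT xm mu T" using FT_GT(1)[OF T _ mu mx, of "x / 2"] x by simp
      finally show ?thesis using GTle c(2) by simp
    qed
    have Z: "decseq u \<and> u \<longlonglongrightarrow> 0"
      by (rule iter_conv_zero[OF c(1) P(1) small P(4) u0 rec])
    have N: "\<not> (\<exists>D>0. xm / lam = FT xm mu T D)" using small c(2) K_def by fastforce
    show ?thesis using Z N False by auto
  qed
qed

theorem theorem2:
  fixes xm lam mu :: real
  assumes "xm > 0" and "lam > 0" and "0 < mu" and "mu \<le> xm"
  shows
   "(\<forall>u :: nat \<Rightarrow> real. u 0 > 0 \<and> (\<forall>n. u (Suc n) = lam / xm * u n * F0 xm mu (u n)) \<longrightarrow>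
       (incseq u \<or> decseq u) \<and>
       (\<exists>L. u \<longlonglongrightarrow> L \<and> L > 0 \<and> (\<forall>D>0. xm / lam = F0 xm mu D \<longleftrightarrow> D = L) \<and>
            ((\<forall>n. u n \<noteq> L) \<longrightarrow> lin_conv u L)))
    \<and>
    (\<forall>T > 0. \<forall>u :: nat \<Rightarrow> real. u 0 > 0 \<and> (\<forall>n. u (Suc n) = lam / xm * u n * FT xm mu T (u n)) \<longrightarrow>
       (incseq u \<or> decseq u) \<and>
       (\<exists>L. u \<longlonglongrightarrow> L \<and> L \<ge> 0 \<and>
          (T < Tc xm lam mu \<longrightarrow> L > 0 \<and> (\<forall>D>0. xm / lam = FT xm mu T D \<longleftrightarrow> D = L) \<and>
               ((\<forall>n. u n \<noteq> L) \<longrightarrow> lin_conv u L)) \<and>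
          (T \<ge> Tc xm lam mu \<longrightarrow> L = 0 \<and> \<not> (\<exists>D>0. xm / lam = FT xm mu T D))))
    \<and>
    (\<forall>\<tau> :: nat \<Rightarrow> real. \<tau> 0 > 0 \<and> (\<forall>n. \<tau> (Suc n) = lam / xm * \<tau> n * GT xm mu (\<tau> n)) \<longrightarrow>
       (incseq \<tau> \<or> decseq \<tau>) \<and> \<tau> \<longlonglongrightarrow> Tc xm lam mu \<and>
       ((\<forall>n. \<tau> n \<noteq> Tc xm lam mu) \<longrightarrow> lin_conv \<tau> (Tc xm lam mu)))"
  using part_i[OF assms] part_ii[OF assms] part_iii[OF assms] by blast

end
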